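(* At a point of a framework, consider a tensor derivation $M(\cdot)$ acting on spinors by a matrix $M^\alpha_\beta$ and on vectors by a matrix $M^i_j$, so that $$M(\cdot)\bigl(T^\alpha_{i\beta}\bigr)=M^\alpha_\lambda T^\lambda_{i\beta}-T^\alpha_{i\lambda}M^\lambda_\beta-M^k_iT^\alpha_{k\beta}.$$ Then $M(\cdot)(T^\alpha_{i\beta})=0$ for all $i,\alpha,\beta$ if and only if there exist a scalar $a$ and a vector $b^k$ with $$M^\alpha_\beta=a\,1^\alpha_\beta+b^kT^\alpha_{k\beta},\qquad M^i_j=b^kT^i_{kj}.$$
   Context: Framework (pointwise data). $V$ is a real 4-dimensional vector space ("spinors") with Greek indices; lowercase Latin indices index a 10-dimensional real vector space (the tangent space); summation convention. $T^k_{ij}$ are structure constants making the tangent space a Lie algebra isomorphic to $\mathfrak{so}(2,3)\cong\mathfrak{sp}(4,\mathbb R)$, and $T^\alpha_{i\beta}$ are matrices with $T^\alpha_{i\lambda}T^\lambda_{j\beta}-T^\alpha_{j\lambda}T^\lambda_{i\beta}=T^k_{ij}T^\alpha_{k\beta}$ giving the 4-dimensional irreducible real representation of this Lie algebra on $V$. $1^\alpha_\beta$ is the identity on $V$. *)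

theory Defs
  imports "HOL-Analysis.Analysis"
begin

text \<open>Index conventions: spinor indices range over the 4-element type 4,
  tangent (vector) indices over the 10-element type 10.
  Ts alpha i beta stands for T^alpha_{i beta}; Tv k i j stands for T^k_{ij}.\<close>

definition eta23 :: "5 \<Rightarrow> 5 \<Rightarrow> real" where
  "eta23 a b = (if a = b then (if a = 0 \<or> a = 1 then 1 else -1) else 0)"

definition in_so23 :: "(5 \<Rightarrow> 5 \<Rightarrow> real) \<Rightarrow> bool" where
  "in_so23 X \<longleftrightarrow> (\<forall>a b. (\<Sum>c\<in>UNIV. X c a * eta23 c b) + (\<Sum>c\<in>UNIV. eta23 a c * X c b) = 0)"

definition mat5_mult :: "(5 \<Rightarrow> 5 \<Rightarrow> real) \<Rightarrow> (5 \<Rightarrow> 5 \<Rightarrow> real) \<Rightarrow> (5 \<Rightarrow> 5 \<Rightarrow> real)" where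
  "mat5_mult X Y = (\<lambda>a b. \<Sum>c\<in>UNIV. X a c * Y c b)"

text \<open>The structure constants Tv make the 10-dimensional tangent space a Lie algebra
  isomorphic to so(2,3): there is a basis E of so(2,3) (10 linearly independent elements
  of the 10-dimensional so(2,3)) with [E_i, E_j] = Tv^k_{ij} E_k, i.e. the linear map
  e_i |-> E_i is a Lie algebra isomorphism.\<close>
definition so23_structure_constants :: "(10 \<Rightarrow> 10 \<Rightarrow> 10 \<Rightarrow> real) \<Rightarrow> bool" where
  "so23_structure_constants Tv \<longleftrightarrow>
     (\<exists>E :: 10 \<Rightarrow> 5 \<Rightarrow> 5 \<Rightarrow> real.
        (\<forall>i. in_so23 (E i)) \<and>
        (\<forall>c :: 10 \<Rightarrow> real. (\<forall>a b. (\<Sum>i\<in>UNIV. c i * E i a b) = 0) \<longrightarrow> (\<forall>i. c i = 0)) \<and>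
        (\<forall>i j a b. mat5_mult (E i) (E j) a b - mat5_mult (E j) (E i) a b
                     = (\<Sum>k\<in>UNIV. Tv k i j * E k a b)))"

definition spin_act :: "(4 \<Rightarrow> 10 \<Rightarrow> 4 \<Rightarrow> real) \<Rightarrow> 10 \<Rightarrow> real^4 \<Rightarrow> real^4" where
  "spin_act Ts i v = (\<chi> a. \<Sum>b\<in>UNIV. Ts a i b * v $ b)"

definition is_rep :: "(10 \<Rightarrow> 10 \<Rightarrow> 10 \<Rightarrow> real) \<Rightarrow> (4 \<Rightarrow> 10 \<Rightarrow> 4 \<Rightarrow> real) \<Rightarrow> bool" where
  "is_rep Tv Ts \<longleftrightarrow> (\<forall>i j a b.
     (\<Sum>l\<in>UNIV. Ts a i l * Ts l j b) - (\<Sum>l\<in>UNIV. Ts a j l * Ts l i b)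
       = (\<Sum>k\<in>UNIV. Tv k i j * Ts a k b))"

definition irreducible_rep :: "(4 \<Rightarrow> 10 \<Rightarrow> 4 \<Rightarrow> real) \<Rightarrow> bool" where
  "irreducible_rep Ts \<longleftrightarrow> (\<forall>W :: (real^4) set.
     subspace W \<longrightarrow> (\<forall>i. \<forall>v\<in>W. spin_act Ts i v \<in> W) \<longrightarrow> W = {0} \<or> W = UNIV)"

definition Mder :: "(4 \<Rightarrow> 4 \<Rightarrow> real) \<Rightarrow> (10 \<Rightarrow> 10 \<Rightarrow> real) \<Rightarrow> (4 \<Rightarrow> 10 \<Rightarrow> 4 \<Rightarrow> real)
                    \<Rightarrow> 4 \<Rightarrow> 10 \<Rightarrow> 4 \<Rightarrow> real" where
  "Mder Ms Mv Ts a i b =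
     (\<Sum>l\<in>UNIV. Ms a l * Ts l i b) - (\<Sum>l\<in>UNIV. Ts a i l * Ms l b)
     - (\<Sum>k\<in>UNIV. Mv k i * Ts a k b)"

end

theory Submission
  imports Defs "Jordan_Normal_Form.Spectral_Radius"
begin

lemma u5: "(UNIV::5 set) = {0,1,2,3,4}"
proof -
  have "x \<in> {0,1,2,3,4}" for x :: 5
  proof (cases x rule: bit1_cases)
    case (of_int z)
    then have "z = 0 \<or> z = 1 \<or> z = 2 \<or> z = 3 \<or> z = 4" by auto
    then show ?thesis using of_int by auto
  qed
  then show ?thesis by auto
qed
definition sg :: "5 \<Rightarrow> real" where "sg a = (if a = 0 \<or> a = 1 then 1 else -1)"

lemma sg_sq[simp]: "sg a * sg a = 1" by (simp add: sg_def)
lemma sg_sq2[simp]: "sg a * (sg a * x) = x" by (simp add: sg_def)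
lemma sg_nz[simp]: "sg a \<noteq> 0" by (simp add: sg_def)

lemma ifz1: "x * (if P then y else 0) = (if P then x * y else (0::real))" by simp
lemma ifz2: "(if P then y else 0) * x = (if P then y * x else (0::real))" by simp

lemma eta_sg: "eta23 a b = (if a = b then sg a else 0)"
  by (simp add: eta23_def sg_def)

definition mm :: "('n::finite \<Rightarrow> 'n \<Rightarrow> real) \<Rightarrow> ('n \<Rightarrow> 'n \<Rightarrow> real) \<Rightarrow> 'n \<Rightarrow> 'n \<Rightarrow> real"
  where "mm X Y = (\<lambda>a b. \<Sum>c\<in>UNIV. X a c * Y c b)"
definition mc :: "('n::finite \<Rightarrow> 'n \<Rightarrow> real) \<Rightarrow> ('n \<Rightarrow> 'n \<Rightarrow> real) \<Rightarrow> 'n \<Rightarrow> 'n \<Rightarrow> real"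
  where "mc X Y = (\<lambda>a b. mm X Y a b - mm Y X a b)"

lemma in_so23_iff: "in_so23 X \<longleftrightarrow> (\<forall>a b. X b a = - (sg a * sg b * X a b))"
proof -
  have e1: "(\<Sum>c\<in>UNIV. X c a * eta23 c b) = X b a * sg b" for a b
    by (simp add: eta_sg ifz1 ifz2)
  have e2: "(\<Sum>c\<in>UNIV. eta23 a c * X c b) = sg a * X a b" for a b
    by (simp add: eta_sg ifz1 ifz2)
  have "X b a * sg b + sg a * X a b = 0 \<longleftrightarrow> X b a = - (sg a * sg b * X a b)" for a b
  proof
    assume h: "X b a * sg b + sg a * X a b = 0"
    have "X b a = X b a * sg b * sg b" by simp
    also have "\<dots> = - (sg a * sg b * X a b)" using h
      by (metis (no_types, opaque_lifting) add_eq_0_iff2 minus_mult_left mult.commute mult.left_commute)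
    finally show "X b a = - (sg a * sg b * X a b)" .
  next
    assume "X b a = - (sg a * sg b * X a b)"
    then show "X b a * sg b + sg a * X a b = 0" by (simp add: algebra_simps)
  qed
  then show ?thesis unfolding in_so23_def e1 e2 by simp
qed

lemma so_rel: "in_so23 X \<Longrightarrow> X b a = - (sg a * sg b * X a b)"
  using in_so23_iff by blast

lemma so_diag: "in_so23 X \<Longrightarrow> X a a = 0"
  using so_rel[of X a a] by simp

definition L :: "5 \<Rightarrow> 5 \<Rightarrow> 5 \<Rightarrow> 5 \<Rightarrow> real" where
  "L a b = (\<lambda>c d. (if c = a \<and> d = b then 1 else 0) - sg a * sg b * (if c = b \<and> d = a then 1 else 0))"

lemma L_so: "in_so23 (L a b)"
  unfolding in_so23_iff L_def
proof (intro allI)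
  fix c d
  show "(if d = a \<and> c = b then 1 else 0) - sg a * sg b * (if d = b \<and> c = a then 1 else 0) =
    - (sg c * sg d * ((if c = a \<and> d = b then 1 else 0) - sg a * sg b * (if c = b \<and> d = a then 1 else 0)))"
    by (cases "c = a"; cases "d = b"; cases "c = b"; cases "d = a") (simp_all add: algebra_simps)
qed

lemma sum_del1: "(\<Sum>e\<in>UNIV. (if c = a \<and> e = (b::'a::finite) then 1 else 0) * (f e::real)) = (if c = a then f b else 0)"
  by (cases "c = a") (auto simp: ifz2 sum.delta)
lemma sum_del2: "(\<Sum>e\<in>UNIV. (f e::real) * (if e = (a::'a::finite) \<and> d = b then 1 else 0)) = (if d = b then f a else 0)"
  by (cases "d = b") (auto simp: ifz1 sum.delta)

lemma mm_L_left: "mm (L a b) Y c d = (if c = a then Y b d else 0) - sg a * sg b * (if c = b then Y a d else 0)"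
proof -
  have "mm (L a b) Y c d = (\<Sum>e\<in>UNIV. (if c = a \<and> e = b then 1 else 0) * Y e d)
     - sg a * sg b * (\<Sum>e\<in>UNIV. (if c = b \<and> e = a then 1 else 0) * Y e d)"
    unfolding mm_def L_def by (simp add: left_diff_distrib sum_subtractf sum_distrib_left mult.assoc)
  then show ?thesis by (simp only: sum_del1)
qed

lemma mm_L_right: "mm Y (L a b) c d = (if d = b then Y c a else 0) - sg a * sg b * (if d = a then Y c b else 0)"
proof -
  have "mm Y (L a b) c d = (\<Sum>e\<in>UNIV. Y c e * (if e = a \<and> d = b then 1 else 0))
     - sg a * sg b * (\<Sum>e\<in>UNIV. Y c e * (if e = b \<and> d = a then 1 else 0))"
    unfolding mm_def L_def by (simp add: right_diff_distrib sum_subtractf sum_distrib_left mult.left_commute)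
  then show ?thesis by (simp only: sum_del2)
qed

lemma mc_L: "mc (L a b) Y c d = (if c = a then Y b d else 0) - sg a * sg b * (if c = b then Y a d else 0)
   - ((if d = b then Y c a else 0) - sg a * sg b * (if d = a then Y c b else 0))"
  unfolding mc_def mm_L_left mm_L_right ..

definition ev :: "5 \<Rightarrow> 5 \<Rightarrow> 5 \<Rightarrow> 5 \<Rightarrow> real" where
  "ev a b c d = (if (c = a \<and> d = b) \<or> (c = b \<and> d = a) then 0 else
     - (sg a * sg b) * ((if c = a then 1 else 0) + (if c = b then 1 else 0) + (if d = a then 1 else 0) + (if d = b then 1 else 0)))"

lemma ev_lemma:
  assumes X: "in_so23 X" and ab: "a \<noteq> b"
  shows "mc (L a b) (mc (L a b) X) c d = ev a b c d * X c d"
proof -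
  have r: "X b a = -(sg a * sg b * X a b)" using so_rel[OF X] by blast
  have ra: "X a a = 0" "X b b = 0" using so_diag[OF X] by auto
  show ?thesis
    unfolding mc_L ev_def
    using ab r ra
    by (cases "c = a"; cases "c = b"; cases "d = a"; cases "d = b") (simp_all add: algebra_simps)
qed

lemma mm_so:
  assumes X: "in_so23 X" and Y: "in_so23 Y"
  shows "mm X Y b a = sg a * sg b * mm Y X a b"
proof -
  have "mm X Y b a = (\<Sum>c\<in>UNIV. X b c * Y c a)" by (simp add: mm_def)
  also have "\<dots> = (\<Sum>c\<in>UNIV. sg a * sg b * (Y a c * X c b))"
  proof (rule sum.cong[OF refl])
    fix c
    have "X b c * Y c a = (sg c * sg b * X c b) * (sg a * sg c * Y a c)"
      using so_rel[OF X, of c b] so_rel[OF Y, of a c] by simp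
    also have "\<dots> = (sg c * sg c) * (sg a * sg b * (Y a c * X c b))" by (simp only: ac_simps)
    finally show "X b c * Y c a = sg a * sg b * (Y a c * X c b)" by simp
  qed
  also have "\<dots> = sg a * sg b * mm Y X a b" by (simp add: mm_def sum_distrib_left)
  finally show ?thesis .
qed

lemma so_mc:
  assumes X: "in_so23 X" and Y: "in_so23 Y"
  shows "in_so23 (mc X Y)"
  unfolding in_so23_iff mc_def
  using mm_so[OF X Y] mm_so[OF Y X] by (simp add: algebra_simps)

lemma L_swap: "L b a = (\<lambda>x y. -(sg a * sg b) * L a b x y)"
proof (intro ext)
  fix x y
  show "L b a x y = -(sg a * sg b) * L a b x y"
    unfolding L_def
    by (cases "x = a"; cases "y = b"; cases "x = b"; cases "y = a") (simp_all add: algebra_simps)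
qed

lemma L_diag: "L a a = (\<lambda>x y. 0)"
  unfolding L_def by (intro ext) simp

lemma LLb:
  assumes "a \<noteq> b" "b \<noteq> c" "a \<noteq> c"
  shows "mc (L a b) (L b c) = L a c"
proof (intro ext)
  fix x y
  have s: "sg a * sg b * (sg b * sg c) = sg a * sg c"
    by (metis (no_types, lifting) mult.assoc mult.commute sg_sq2)
  show "mc (L a b) (L b c) x y = L a c x y"
    unfolding mc_L using assms s
    unfolding L_def
    by (cases "x = a"; cases "y = c"; cases "x = c"; cases "y = a"; cases "x = b"; cases "y = b")
       (simp_all add: algebra_simps)
qed

lemma dd1: fixes f :: "'a::finite \<Rightarrow> 'b::finite \<Rightarrow> real" shows "(\<Sum>a\<in>UNIV. \<Sum>b\<in>UNIV. (f a b::real) * (if c = a \<and> d = b then 1 else 0)) = f c (d::'b::finite)"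
proof -
  have "(\<Sum>a\<in>UNIV. \<Sum>b\<in>UNIV. (f a b::real) * (if c = a \<and> d = b then 1 else 0))
     = (\<Sum>a\<in>UNIV. if c = a then f a d else 0)"
    by (intro sum.cong refl) (auto simp: ifz1 sum.delta)
  also have "\<dots> = f c d" by (simp add: sum.delta)
  finally show ?thesis .
qed

lemma dd2: fixes f :: "'a::finite \<Rightarrow> 'b::finite \<Rightarrow> real" shows "(\<Sum>a\<in>UNIV. \<Sum>b\<in>UNIV. (f a b::real) * (if c = b \<and> d = a then 1 else 0)) = f d (c::'b::finite)"
proof -
  have "(\<Sum>a\<in>UNIV. \<Sum>b\<in>UNIV. (f a b::real) * (if c = b \<and> d = a then 1 else 0))
     = (\<Sum>a\<in>UNIV. if d = a then f a c else 0)"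
    by (intro sum.cong refl) (auto simp: ifz1 sum.delta)
  also have "\<dots> = f d c" by (simp add: sum.delta)
  finally show ?thesis .
qed

lemma so_decomp:
  assumes X: "in_so23 X"
  shows "X c d = (\<Sum>a\<in>UNIV. \<Sum>b\<in>UNIV. (1/2) * X a b * L a b c d)"
proof -
  have "(\<Sum>a\<in>UNIV. \<Sum>b\<in>UNIV. (1/2) * X a b * L a b c d)
    = (\<Sum>a\<in>UNIV. \<Sum>b\<in>UNIV. ((1/2) * X a b) * (if c = a \<and> d = b then 1 else 0))
      - (\<Sum>a\<in>UNIV. \<Sum>b\<in>UNIV. ((1/2) * X a b * sg a * sg b) * (if c = b \<and> d = a then 1 else 0))"
    unfolding L_def by (simp add: right_diff_distrib sum_subtractf algebra_simps)
  also have "\<dots> = (1/2) * X c d - (1/2) * X d c * sg d * sg c"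
    by (simp only: dd1 dd2)
  also have "\<dots> = X c d" using so_rel[OF X, of c d] by (simp add: algebra_simps)
  finally show ?thesis by simp
qed

lemma five_distinct:
  assumes "p \<noteq> (q::5)"
  obtains r s t where "r \<noteq> p" "r \<noteq> q" "s \<noteq> p" "s \<noteq> q" "t \<noteq> p" "t \<noteq> q"
    "r \<noteq> s" "r \<noteq> t" "s \<noteq> t" "\<And>x. x = p \<or> x = q \<or> x = r \<or> x = s \<or> x = t"
proof -
  have "card (UNIV - {p,q}) = 3" using assms by (simp add: card_Diff_subset)
  then obtain r s t where rst: "UNIV - {p,q} = {r,s,t}" "r \<noteq> s" "s \<noteq> t" "r \<noteq> t"
    by (auto simp: card_3_iff)
  have "r \<in> UNIV - {p,q}" "s \<in> UNIV - {p,q}" "t \<in> UNIV - {p,q}" using rst(1) by auto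
  moreover have "x = p \<or> x = q \<or> x = r \<or> x = s \<or> x = t" for x
  proof -
    have "x \<in> {p,q} \<or> x \<in> UNIV - {p,q}" by blast
    then show ?thesis using rst(1) by blast
  qed
  ultimately show ?thesis using that rst by blast
qed

lemma ev_nz: "c = a \<Longrightarrow> d \<noteq> b \<Longrightarrow> d \<noteq> a \<Longrightarrow> ev a b c d \<noteq> 0"
  unfolding ev_def by simp
lemma ev_nz2: "d = a \<Longrightarrow> c \<noteq> b \<Longrightarrow> c \<noteq> a \<Longrightarrow> ev a b c d \<noteq> 0"
  unfolding ev_def by simp
lemma ev_out: "c \<noteq> a \<Longrightarrow> c \<noteq> b \<Longrightarrow> d \<noteq> a \<Longrightarrow> d \<noteq> b \<Longrightarrow> ev a b c d = 0"
  unfolding ev_def by simp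
lemma ev_eq1: "ev a b a b = 0" unfolding ev_def by simp
lemma ev_eq2: "ev a b b a = 0" unfolding ev_def by simp

lemma s_simple_one:
  assumes cl: "\<And>a b Y. Y \<in> I \<Longrightarrow> mc (L a b) Y \<in> I"
  and sc: "\<And>k Y. Y \<in> I \<Longrightarrow> (\<lambda>x y. k * Y x y) \<in> I"
  and XI: "X \<in> I" and X: "in_so23 X" and pq: "X p q \<noteq> 0"
  shows "L p q \<in> I"
proof -
  have npq: "p \<noteq> q" using pq so_diag[OF X] by auto
  obtain r s t where d: "r \<noteq> p" "r \<noteq> q" "s \<noteq> p" "s \<noteq> q" "t \<noteq> p" "t \<noteq> q"
    "r \<noteq> s" "r \<noteq> t" "s \<noteq> t" and all: "\<And>x. x = p \<or> x = q \<or> x = r \<or> x = s \<or> x = t"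
    by (rule five_distinct[OF npq]) blast
  define X1 where "X1 = mc (L p r) (mc (L p r) X)"
  define X2 where "X2 = mc (L q r) (mc (L q r) X1)"
  define X3 where "X3 = mc (L p s) (mc (L p s) X2)"
  define X4 where "X4 = mc (L p t) (mc (L p t) X3)"
  have so1: "in_so23 X1" unfolding X1_def by (intro so_mc L_so X)
  have so2: "in_so23 X2" unfolding X2_def by (intro so_mc L_so so1)
  have so3: "in_so23 X3" unfolding X3_def by (intro so_mc L_so so2)
  have I4: "X4 \<in> I" unfolding X4_def X3_def X2_def X1_def by (intro cl XI)
  have e4: "X4 x y = ev p t x y * (ev p s x y * (ev q r x y * (ev p r x y * X x y)))" for x y
    unfolding X4_def ev_lemma[OF so3 d(5)[symmetric]]
    unfolding X3_def ev_lemma[OF so2 d(3)[symmetric]]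
    unfolding X2_def ev_lemma[OF so1 d(2)[symmetric]]
    unfolding X1_def ev_lemma[OF X d(1)[symmetric]] ..
  define k where "k = ev p t p q * (ev p s p q * (ev q r p q * ev p r p q))"
  have knz: "k \<noteq> 0" unfolding k_def using d npq
    by (simp add: ev_nz ev_nz2)
  have sym: "ev a b y x = ev a b x y" for a b x y unfolding ev_def by auto
  have rqp: "X q p = - (sg p * sg q * X p q)" using so_rel[OF X] by blast
  have X4eq: "X4 = (\<lambda>x y. (k * X p q) * L p q x y)"
  proof (intro ext)
    fix x y
    have "(x = p \<and> y = q) \<or> (x = q \<and> y = p) \<or> ((x \<noteq> p \<or> y \<noteq> q) \<and> (x \<noteq> q \<or> y \<noteq> p))" by blast
    then show "X4 x y = (k * X p q) * L p q x y"
    proof (elim disjE)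
      assume "x = p \<and> y = q"
      then have xp: "x = p" and yq: "y = q" by auto
      have "L p q p q = 1" unfolding L_def using npq by simp
      then show ?thesis unfolding e4 k_def xp yq by simp
    next
      assume "x = q \<and> y = p"
      then have xp: "x = q" and yq: "y = p" by auto
      have "L p q q p = - (sg p * sg q)" unfolding L_def using npq by simp
      then show ?thesis unfolding e4 k_def xp yq rqp sym[of _ _ p q] by simp
    next
      assume h: "(x \<noteq> p \<or> y \<noteq> q) \<and> (x \<noteq> q \<or> y \<noteq> p)"
      have h1: "x \<noteq> p \<or> y \<noteq> q" and h2: "x \<noteq> q \<or> y \<noteq> p" using h by auto
      have L0: "L p q x y = 0" unfolding L_def using h1 h2
        by (cases "x = p"; cases "y = q"; cases "x = q"; cases "y=p") simp_all
      have "ev p t x y * (ev p s x y * (ev q r x y * ev p r x y)) = 0 \<or> X x y = 0"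
      proof (cases "x = y")
        case True then show ?thesis using so_diag[OF X] by simp
      next
        case False
        note dd = d d[symmetric] npq npq[symmetric]
        from all[of x] all[of y] h1 h2 False show ?thesis
          by (elim disjE; simp add: dd ev_out ev_eq1 ev_eq2)
      qed
      then show ?thesis unfolding e4 L0 by auto
    qed
  qed
  have "L p q = (\<lambda>x y. (1 / (k * X p q)) * X4 x y)"
    unfolding X4eq using knz pq by (intro ext) simp
  then show ?thesis using sc[OF I4, of "1 / (k * X p q)"] by simp
qed

lemma mc_anti: "mc Y Z = (\<lambda>x y. -1 * mc Z Y x y)"
  unfolding mc_def by (intro ext) simp

lemma s_simple_gen:
  assumes cl: "\<And>a b Y. Y \<in> I \<Longrightarrow> mc (L a b) Y \<in> I"
  and sc: "\<And>k Y. Y \<in> I \<Longrightarrow> (\<lambda>x y. k * Y x y) \<in> I"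
  and LI: "L p q \<in> I" and npq: "p \<noteq> q"
  shows "L a b \<in> I"
proof -
  have right: "mc Y (L c d) \<in> I" if "Y \<in> I" for Y c d
    unfolding mc_anti[of Y] by (intro sc cl that)
  have st1: "L p b \<in> I" if "b \<noteq> p" for b
  proof (cases "b = q")
    case True then show ?thesis using LI by simp
  next
    case False
    have "L p b = mc (L p q) (L q b)" using LLb[of p q b] npq False that by simp
    then show ?thesis using right[OF LI] by simp
  qed
  show ?thesis
  proof (cases "a = b")
    case True
    then show ?thesis using sc[OF LI, of 0] by (simp add: L_diag)
  next
    case nab: False
    show ?thesis
    proof (cases "a = p")
      case True then show ?thesis using st1 nab by simp
    next
      case nap: False
      show ?thesis
      proof (cases "b = p")
        case True
        have e: "L a p = (\<lambda>x y. -(sg p * sg a) * L p a x y)" by (rule L_swap)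
        show ?thesis unfolding True e by (rule sc[OF st1]) (use nap in simp)
      next
        case False
        have "L a b = mc (L a p) (L p b)" using LLb[of a p b] nab nap False by simp
        then show ?thesis using cl[OF st1[of b]] False by simp
      qed
    qed
  qed
qed

lemma mm_bilin:
  fixes A :: "'i \<Rightarrow> 'n::finite \<Rightarrow> 'n \<Rightarrow> real" and B :: "'j \<Rightarrow> 'n \<Rightarrow> 'n \<Rightarrow> real"
  assumes "finite (UNIV::'i set)" "finite (UNIV::'j set)"
  shows "mm (\<lambda>a b. \<Sum>i\<in>UNIV. f i * A i a b) (\<lambda>a b. \<Sum>j\<in>UNIV. g j * B j a b) a b
     = (\<Sum>i\<in>UNIV. \<Sum>j\<in>UNIV. f i * g j * mm (A i) (B j) a b)"
proof -
  have "mm (\<lambda>a b. \<Sum>i\<in>UNIV. f i * A i a b) (\<lambda>a b. \<Sum>j\<in>UNIV. g j * B j a b) a b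
     = (\<Sum>c\<in>UNIV. \<Sum>i\<in>UNIV. \<Sum>j\<in>UNIV. f i * g j * (A i a c * B j c b))"
    unfolding mm_def by (simp add: sum_product algebra_simps)
  also have "\<dots> = (\<Sum>i\<in>UNIV. \<Sum>c\<in>UNIV. \<Sum>j\<in>UNIV. f i * g j * (A i a c * B j c b))"
    by (rule sum.swap)
  also have "\<dots> = (\<Sum>i\<in>UNIV. \<Sum>j\<in>UNIV. \<Sum>c\<in>UNIV. f i * g j * (A i a c * B j c b))"
    by (rule sum.cong[OF refl], rule sum.swap)
  also have "\<dots> = (\<Sum>i\<in>UNIV. \<Sum>j\<in>UNIV. f i * g j * mm (A i) (B j) a b)"
    by (simp add: mm_def sum_distrib_left)
  finally show ?thesis .
qed

lemma mat5_mm: "mat5_mult = mm"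
  by (intro ext) (simp add: mat5_mult_def mm_def)

lemma sgv: "sg 0 = 1" "sg 1 = 1" "sg 2 = -1" "sg 3 = -1" "sg 4 = -1" by (simp_all add: sg_def)
definition PL :: "(5 \<times> 5) list" where
  "PL = [(0,1),(0,2),(0,3),(0,4),(1,2),(1,3),(1,4),(2,3),(2,4),(3,4)]"

lemma so_decomp_list:
  assumes X: "in_so23 X"
  shows "X c d = (\<Sum>p\<in>set PL. X (fst p) (snd p) * L (fst p) (snd p) c d)"
proof -
  have r: "X b a = - (sg a * sg b * X a b)" for a b using so_rel[OF X] by blast
  have dg: "X a a = 0" for a using so_diag[OF X] by blast
  have s: "(\<Sum>p\<in>set PL. X (fst p) (snd p) * L (fst p) (snd p) c d) =
    X 0 1 * L 0 1 c d + X 0 2 * L 0 2 c d + X 0 3 * L 0 3 c d + X 0 4 * L 0 4 c d +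
    X 1 2 * L 1 2 c d + X 1 3 * L 1 3 c d + X 1 4 * L 1 4 c d + X 2 3 * L 2 3 c d +
    X 2 4 * L 2 4 c d + X 3 4 * L 3 4 c d"
    unfolding PL_def by simp
  have c: "c \<in> {0,1,2,3,4}" and d: "d \<in> {0,1,2,3,4}" using u5 by auto
  show ?thesis unfolding s using c d
    by (elim insertE emptyE; simp add: L_def sgv dg r[of 0 1] r[of 0 2] r[of 0 3] r[of 0 4]
       r[of 1 2] r[of 1 3] r[of 1 4] r[of 2 3] r[of 2 4] r[of 3 4])
qed

definition vm :: "(5 \<Rightarrow> 5 \<Rightarrow> real) \<Rightarrow> real^(5\<times>5)" where
  "vm X = (\<chi> p. X (fst p) (snd p))"

lemma vm_inj: "vm X = vm Y \<Longrightarrow> X = Y"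
proof (intro ext)
  fix a b
  assume h: "vm X = vm Y"
  have "vm X $ (a,b) = vm Y $ (a,b)" using h by simp
  then show "X a b = Y a b" unfolding vm_def by simp
qed

lemma vm_decomp:
  assumes X: "in_so23 X"
  shows "vm X = (\<Sum>p\<in>set PL. X (fst p) (snd p) *\<^sub>R vm (L (fst p) (snd p)))"
  unfolding Finite_Cartesian_Product.vec_eq_iff
proof
  fix q :: "5\<times>5"
  show "vm X $ q = (\<Sum>p\<in>set PL. X (fst p) (snd p) *\<^sub>R vm (L (fst p) (snd p))) $ q"
    unfolding vm_def sum_component
    using so_decomp_list[OF X, of "fst q" "snd q"] by simp
qed

locale lsetup =
  fixes Tv :: "10 \<Rightarrow> 10 \<Rightarrow> 10 \<Rightarrow> real" and Ts :: "4 \<Rightarrow> 10 \<Rightarrow> 4 \<Rightarrow> real"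
    and E :: "10 \<Rightarrow> 5 \<Rightarrow> 5 \<Rightarrow> real"
  assumes Eso: "\<And>i. in_so23 (E i)"
  and Eind: "\<And>c::10\<Rightarrow>real. (\<forall>a b. (\<Sum>i\<in>UNIV. c i * E i a b) = 0) \<Longrightarrow> (\<forall>i. c i = 0)"
  and Ebr: "\<And>i j a b. mat5_mult (E i) (E j) a b - mat5_mult (E j) (E i) a b
                     = (\<Sum>k\<in>UNIV. Tv k i j * E k a b)"
  and rep: "is_rep Tv Ts"
  and irr: "irreducible_rep Ts"
begin

definition phi :: "real^10 \<Rightarrow> 5 \<Rightarrow> 5 \<Rightarrow> real" where
  "phi x = (\<lambda>a b. \<Sum>i\<in>UNIV. x$i * E i a b)"
definition adm :: "real^10 \<Rightarrow> real^10^10" where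
  "adm x = (\<chi> k j. \<Sum>i\<in>UNIV. x$i * Tv k i j)"
definition br :: "real^10 \<Rightarrow> real^10 \<Rightarrow> real^10" where
  "br x y = adm x *v y"

lemma Ebr': "mc (E i) (E j) a b = (\<Sum>k\<in>UNIV. Tv k i j * E k a b)"
  using Ebr unfolding mat5_mm mc_def by simp

lemma br_comp: "br x y $ k = (\<Sum>i\<in>UNIV. \<Sum>j\<in>UNIV. x$i * y$j * Tv k i j)"
proof -
  have "br x y $ k = (\<Sum>j\<in>UNIV. \<Sum>i\<in>UNIV. x$i * y$j * Tv k i j)"
    unfolding br_def adm_def matrix_vector_mult_def by (simp add: sum_distrib_left sum_distrib_right algebra_simps)
  also have "\<dots> = (\<Sum>i\<in>UNIV. \<Sum>j\<in>UNIV. x$i * y$j * Tv k i j)" by (rule sum.swap)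
  finally show ?thesis .
qed

lemma phi_br: "phi (br x y) = mc (phi x) (phi y)"
proof (intro ext)
  fix a b
  have "phi (br x y) a b = (\<Sum>k\<in>UNIV. \<Sum>i\<in>UNIV. \<Sum>j\<in>UNIV. x$i * y$j * (Tv k i j * E k a b))"
    unfolding phi_def br_comp by (simp add: sum_distrib_left sum_distrib_right algebra_simps)
  also have "\<dots> = (\<Sum>i\<in>UNIV. \<Sum>k\<in>UNIV. \<Sum>j\<in>UNIV. x$i * y$j * (Tv k i j * E k a b))"
    by (rule sum.swap)
  also have "\<dots> = (\<Sum>i\<in>UNIV. \<Sum>j\<in>UNIV. \<Sum>k\<in>UNIV. x$i * y$j * (Tv k i j * E k a b))"
    by (rule sum.cong[OF refl], rule sum.swap)
  also have "\<dots> = (\<Sum>i\<in>UNIV. \<Sum>j\<in>UNIV. x$i * y$j * mc (E i) (E j) a b)"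
    unfolding Ebr' by (simp add: sum_distrib_left)
  also have "\<dots> = mc (phi x) (phi y) a b"
    unfolding mc_def phi_def
    by (simp add: mm_bilin right_diff_distrib sum_subtractf algebra_simps)
       (subst (2) sum.swap, simp add: algebra_simps)
  finally show "phi (br x y) a b = mc (phi x) (phi y) a b" .
qed

lemma phi_add: "phi (x + y) = (\<lambda>a b. phi x a b + phi y a b)"
  unfolding phi_def by (intro ext) (simp add: distrib_right sum.distrib)
lemma phi_scale: "phi (c *\<^sub>R x) = (\<lambda>a b. c * phi x a b)"
  unfolding phi_def by (intro ext) (simp add: sum_distrib_left mult.assoc)
lemma phi_sum: "finite S \<Longrightarrow> phi (\<Sum>s\<in>S. f s) a b = (\<Sum>s\<in>S. phi (f s) a b)"
proof (induction S rule: finite_induct)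
  case empty
  then show ?case by (simp add: phi_def)
next
  case (insert s S)
  then show ?case by (simp add: phi_add)
qed
lemma phi_zero: "phi x = (\<lambda>a b. 0) \<Longrightarrow> x = 0"
proof -
  assume h: "phi x = (\<lambda>a b. 0)"
  have "\<forall>i. x$i = 0"
  proof (rule Eind[of "\<lambda>i. x$i"], intro allI)
    fix a b
    have "phi x a b = 0" using h by simp
    then show "(\<Sum>i\<in>UNIV. x $ i * E i a b) = 0" unfolding phi_def .
  qed
  then show "x = 0" by (simp add: Finite_Cartesian_Product.vec_eq_iff)
qed
lemma phi_inj: "phi x = phi y \<Longrightarrow> x = y"
proof -
  assume h: "phi x = phi y"
  have "phi (x - y) = (\<lambda>a b. 0)"
    using h unfolding phi_def by (intro ext) (simp add: left_diff_distrib sum_subtractf fun_eq_iff)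
  then have "x - y = 0" by (rule phi_zero)
  then show "x = y" by simp
qed
lemma phi_so: "in_so23 (phi x)"
  unfolding in_so23_iff
proof (intro allI)
  fix a b
  have "phi x b a = (\<Sum>i\<in>UNIV. x $ i * (- (sg a * sg b * E i a b)))"
    unfolding phi_def by (rule sum.cong[OF refl]) (use so_rel[OF Eso] in metis)
  also have "\<dots> = - (sg a * sg b * phi x a b)"
    unfolding phi_def by (simp add: sum_distrib_left sum_negf algebra_simps)
  finally show "phi x b a = - (sg a * sg b * phi x a b)" .
qed

definition psi :: "real^10 \<Rightarrow> real^(5\<times>5)" where "psi x = vm (phi x)"

lemma psi_linear: "linear psi"
proof (rule linearI)
  fix x y :: "real^10" and c :: real
  show "psi (x + y) = psi x + psi y" unfolding psi_def vm_def phi_add by (simp add: Finite_Cartesian_Product.vec_eq_iff)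
  show "psi (c *\<^sub>R x) = c *\<^sub>R psi x" unfolding psi_def vm_def phi_scale by (simp add: Finite_Cartesian_Product.vec_eq_iff)
qed

lemma psi_inj: "inj psi"
  unfolding inj_def psi_def using vm_inj phi_inj by blast

lemma phi_surj_L: "\<exists>u. phi u = L a b"
proof -
  define B where "B = (\<lambda>p. vm (L (fst p) (snd p))) ` set PL"
  have finB: "finite B" unfolding B_def by simp
  have cardB: "card B \<le> 10"
  proof -
    have "card B \<le> card (set PL)" unfolding B_def by (rule card_image_le) simp
    also have "\<dots> \<le> length PL" by (rule card_length)
    finally show ?thesis by (simp add: PL_def)
  qed
  have inB: "vm X \<in> span B" if "in_so23 X" for X
  proof -
    have "vm X = (\<Sum>p\<in>set PL. X (fst p) (snd p) *\<^sub>R vm (L (fst p) (snd p)))"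
      by (rule vm_decomp[OF that])
    also have "\<dots> \<in> span B"
      by (intro span_sum span_mul span_base) (auto simp: B_def)
    finally show ?thesis .
  qed
  have sub: "range psi \<subseteq> span B" using inB phi_so unfolding psi_def by auto
  have d1: "dim (range psi) = 10"
  proof -
    have "dim (psi ` UNIV) = dim (UNIV :: (real^10) set)"
      by (rule dim_image_eq[OF psi_linear]) (use psi_inj in \<open>auto simp: inj_on_def inj_def\<close>)
    then show ?thesis by simp
  qed
  have d2: "dim (span B) \<le> 10" using dim_le_card[OF order_refl finB] cardB by simp
  have eq: "range psi = span B"
  proof (rule subspace_dim_equal)
    show "Real_Vector_Spaces.subspace (range psi)"
      by (rule linear_subspace_image[OF psi_linear subspace_UNIV])
    show "Real_Vector_Spaces.subspace (span B)" by simp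
    show "range psi \<subseteq> span B" by (rule sub)
    show "dim (span B) \<le> dim (range psi)" using d1 d2 by simp
  qed
  have "vm (L a b) \<in> range psi" unfolding eq by (rule inB[OF L_so])
  then obtain u where "vm (L a b) = psi u" by auto
  then have "phi u = L a b" unfolding psi_def by (intro vm_inj) simp
  then show ?thesis by blast
qed

end

lemma sum4_swap: "(\<Sum>a\<in>A. \<Sum>b\<in>B. \<Sum>i\<in>C. \<Sum>j\<in>D. f a b i j) = (\<Sum>i\<in>C. \<Sum>j\<in>D. \<Sum>a\<in>A. \<Sum>b\<in>B. f a b i j)"
proof -
  have "(\<Sum>a\<in>A. \<Sum>b\<in>B. \<Sum>i\<in>C. \<Sum>j\<in>D. f a b i j) = (\<Sum>a\<in>A. \<Sum>i\<in>C. \<Sum>b\<in>B. \<Sum>j\<in>D. f a b i j)"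
    by (rule sum.cong[OF refl], rule sum.swap)
  also have "\<dots> = (\<Sum>i\<in>C. \<Sum>a\<in>A. \<Sum>b\<in>B. \<Sum>j\<in>D. f a b i j)" by (rule sum.swap)
  also have "\<dots> = (\<Sum>i\<in>C. \<Sum>a\<in>A. \<Sum>j\<in>D. \<Sum>b\<in>B. f a b i j)"
    by (rule sum.cong[OF refl], rule sum.cong[OF refl], rule sum.swap)
  also have "\<dots> = (\<Sum>i\<in>C. \<Sum>j\<in>D. \<Sum>a\<in>A. \<Sum>b\<in>B. f a b i j)"
    by (rule sum.cong[OF refl], rule sum.swap)
  finally show ?thesis .
qed

lemma mm_assoc: "mm (mm X Y) Z = mm X (mm Y (Z::'n::finite \<Rightarrow> 'n \<Rightarrow> real))"
proof (intro ext)
  fix a b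
  have "mm (mm X Y) Z a b = (\<Sum>c\<in>UNIV. \<Sum>e\<in>UNIV. X a e * Y e c * Z c b)"
    unfolding mm_def by (simp add: sum_distrib_right)
  also have "\<dots> = (\<Sum>e\<in>UNIV. \<Sum>c\<in>UNIV. X a e * Y e c * Z c b)" by (rule sum.swap)
  also have "\<dots> = mm X (mm Y Z) a b"
    unfolding mm_def by (simp add: sum_distrib_left mult.assoc)
  finally show "mm (mm X Y) Z a b = mm X (mm Y Z) a b" .
qed

lemma mm_diff_left: "mm (\<lambda>a b. X a b - Y a b) Z = (\<lambda>a b. mm X Z a b - mm Y (Z::'n::finite \<Rightarrow> 'n \<Rightarrow> real) a b)"
  unfolding mm_def by (intro ext) (simp add: left_diff_distrib sum_subtractf)
lemma mm_diff_right: "mm Z (\<lambda>a b. X a b - Y a b) = (\<lambda>a b. mm Z X a b - mm (Z::'n::finite \<Rightarrow> 'n \<Rightarrow> real) Y a b)"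
  unfolding mm_def by (intro ext) (simp add: right_diff_distrib sum_subtractf)

lemma mc_jacobi: "mc (mc X Y) W = (\<lambda>a b. mc X (mc Y W) a b - mc Y (mc X (W::'n::finite \<Rightarrow> 'n \<Rightarrow> real)) a b)"
  unfolding mc_def mm_diff_left mm_diff_right mm_assoc by (intro ext) simp

lemma mmul_sub_left: "((A::real^'n^'n) - B) ** C = A ** C - B ** C"
  by (simp add: matrix_matrix_mult_def Finite_Cartesian_Product.vec_eq_iff left_diff_distrib sum_subtractf)
lemma mmul_sub_right: "(C::real^'n^'n) ** (A - B) = C ** A - C ** B"
  by (simp add: matrix_matrix_mult_def Finite_Cartesian_Product.vec_eq_iff right_diff_distrib sum_subtractf)
lemma mmul_add_left: "((A::real^'n^'n) + B) ** C = A ** C + B ** C"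
  by (simp add: matrix_matrix_mult_def Finite_Cartesian_Product.vec_eq_iff distrib_right sum.distrib)

context lsetup
begin

definition u :: "5 \<Rightarrow> 5 \<Rightarrow> real^10" where "u a b = (SOME v. phi v = L a b)"
lemma phi_u: "phi (u a b) = L a b"
  unfolding u_def using phi_surj_L[of a b] by (rule someI_ex)

lemma frame: "v = (\<Sum>a\<in>UNIV. \<Sum>b\<in>UNIV. (1/2 * phi v a b) *\<^sub>R u a b)"
proof (rule phi_inj, intro ext)
  fix c d
  have fs: "finite (UNIV::5 set)" by simp
  show "phi v c d = phi (\<Sum>a\<in>UNIV. \<Sum>b\<in>UNIV. (1/2 * phi v a b) *\<^sub>R u a b) c d"
    unfolding phi_sum[OF fs] phi_scale phi_u
    using so_decomp[OF phi_so, of v c d] by (simp add: mult.assoc)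
qed

lemma phi_axis: "phi (axis j 1) = E j"
  unfolding phi_def by (intro ext) (simp add: axis_def ifz2 sum.delta)

lemma frame_comp: "(\<Sum>a\<in>UNIV. \<Sum>b\<in>UNIV. 1/2 * E j a b * u a b $ l) = (if j = l then 1 else 0)"
proof -
  have "axis j (1::real) $ l = (\<Sum>a\<in>UNIV. \<Sum>b\<in>UNIV. (1/2 * phi (axis j 1) a b) *\<^sub>R u a b) $ l"
    using frame[of "axis j 1"] by simp
  also have "\<dots> = (\<Sum>a\<in>UNIV. \<Sum>b\<in>UNIV. 1/2 * E j a b * u a b $ l)"
    unfolding phi_axis sum_component by simp
  finally have h: "(\<Sum>a\<in>UNIV. \<Sum>b\<in>UNIV. 1/2 * E j a b * u a b $ l) = axis j (1::real) $ l" ..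
  show ?thesis unfolding h by (simp add: axis_def)
qed

lemma trace_frame: "trace A = (\<Sum>a\<in>UNIV. \<Sum>b\<in>UNIV. 1/2 * phi (A *v u a b) a b)"
proof -
  have "(\<Sum>a\<in>UNIV. \<Sum>b\<in>UNIV. 1/2 * phi (A *v u a b) a b)
     = (\<Sum>a\<in>UNIV. \<Sum>b\<in>UNIV. \<Sum>i\<in>UNIV. \<Sum>j\<in>UNIV. A$i$j * (1/2 * E i a b * u a b $ j))"
    unfolding phi_def matrix_vector_mult_def
    by (simp add: sum_distrib_left sum_distrib_right algebra_simps)
  also have "\<dots> = (\<Sum>i\<in>UNIV. \<Sum>j\<in>UNIV. \<Sum>a\<in>UNIV. \<Sum>b\<in>UNIV. A$i$j * (1/2 * E i a b * u a b $ j))"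
    by (rule sum4_swap)
  also have "\<dots> = (\<Sum>i\<in>UNIV. \<Sum>j\<in>UNIV. A$i$j * (if i = j then 1 else 0))"
  proof (intro sum.cong refl)
    fix i j
    have "(\<Sum>a\<in>UNIV. \<Sum>b\<in>UNIV. A$i$j * (1/2 * E i a b * u a b $ j))
       = A$i$j * (\<Sum>a\<in>UNIV. \<Sum>b\<in>UNIV. 1/2 * E i a b * u a b $ j)"
      by (simp only: sum_distrib_left)
    then show "(\<Sum>a\<in>UNIV. \<Sum>b\<in>UNIV. A$i$j * (1/2 * E i a b * u a b $ j))
       = A$i$j * (if i = j then 1 else 0)" unfolding frame_comp .
  qed
  also have "\<dots> = trace A" by (simp add: trace_def ifz1 sum.delta)
  finally show ?thesis by simp
qed

lemma phi_adm: "phi (adm x *v w) = mc (phi x) (phi w)"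
  using phi_br unfolding br_def .

lemma phi_diff: "phi (x - y) = (\<lambda>a b. phi x a b - phi y a b)"
  unfolding phi_def by (intro ext) (simp add: left_diff_distrib sum_subtractf)

lemma jacobi: "adm (br x y) = adm x ** adm y - adm y ** adm x"
proof -
  have "adm (br x y) *v w = (adm x ** adm y - adm y ** adm x) *v w" for w
  proof (rule phi_inj)
    show "phi (adm (br x y) *v w) = phi ((adm x ** adm y - adm y ** adm x) *v w)"
      unfolding phi_adm phi_br matrix_vector_mult_diff_rdistrib phi_diff
        matrix_vector_mul_assoc[symmetric] mc_jacobi ..
  qed
  then show ?thesis by (simp add: matrix_eq)
qed

definition kappa :: "real^10 \<Rightarrow> real^10 \<Rightarrow> real" where
  "kappa x y = trace (adm x ** adm y)"

lemma kappa_frame: "kappa x y = (\<Sum>a\<in>UNIV. \<Sum>b\<in>UNIV. 1/2 * mc (phi x) (mc (phi y) (L a b)) a b)"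
  unfolding kappa_def trace_frame matrix_vector_mul_assoc[symmetric] phi_adm phi_u ..

lemma kappa_inv: "kappa (br z x) y = - kappa x (br z y)"
proof -
  let ?Z = "adm z" and ?X = "adm x" and ?Y = "adm y"
  have "kappa (br z x) y = trace (?Z ** (?X ** ?Y)) - trace (?X ** ?Z ** ?Y)"
    unfolding kappa_def jacobi mmul_sub_left trace_sub matrix_mul_assoc ..
  moreover have "kappa x (br z y) = trace (?X ** ?Z ** ?Y) - trace (?X ** ?Y ** ?Z)"
    unfolding kappa_def jacobi mmul_sub_right trace_sub matrix_mul_assoc ..
  moreover have "trace (?Z ** (?X ** ?Y)) = trace (?X ** ?Y ** ?Z)" by (rule trace_mul_sym)
  ultimately show ?thesis by simp
qed

lemma g_simple:
  assumes J: "Real_Vector_Spaces.subspace J" and cl: "\<And>z x. x \<in> J \<Longrightarrow> br z x \<in> J"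
    and xJ: "x \<in> J" and xnz: "x \<noteq> 0"
  shows "J = UNIV"
proof -
  define I where "I = phi ` J"
  have clI: "mc (L a b) Y \<in> I" if "Y \<in> I" for a b Y
  proof -
    from that obtain y where y: "y \<in> J" "Y = phi y" unfolding I_def by blast
    have "mc (L a b) Y = phi (br (u a b) y)" unfolding phi_br phi_u y(2) ..
    then show ?thesis unfolding I_def using cl[OF y(1)] by auto
  qed
  have scI: "(\<lambda>x y. k * Y x y) \<in> I" if "Y \<in> I" for k Y
  proof -
    from that obtain y where y: "y \<in> J" "Y = phi y" unfolding I_def by blast
    have "(\<lambda>x y. k * Y x y) = phi (k *\<^sub>R y)" unfolding phi_scale y(2) ..
    moreover have "k *\<^sub>R y \<in> J" using J y(1) by (simp add: Real_Vector_Spaces.subspace_scale)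
    ultimately show ?thesis unfolding I_def by auto
  qed
  have XI: "phi x \<in> I" unfolding I_def using xJ by auto
  obtain p q where pq: "phi x p q \<noteq> 0"
  proof -
    have "phi x \<noteq> (\<lambda>a b. 0)" using phi_zero xnz by blast
    then show ?thesis using that by (meson ext)
  qed
  have LI: "L p q \<in> I" by (rule s_simple_one[OF clI scI XI phi_so pq])
  have npq: "p \<noteq> q" using pq so_diag[OF phi_so] by metis
  have uJ: "u a b \<in> J" for a b
  proof -
    have "L a b \<in> I" by (rule s_simple_gen[OF clI scI LI npq])
    then obtain y where y: "y \<in> J" "L a b = phi y" unfolding I_def by auto
    then have "u a b = y" using phi_u phi_inj by metis
    then show ?thesis using y by simp
  qed
  have "v \<in> J" for v
  proof -
    have "v = (\<Sum>a\<in>UNIV. \<Sum>b\<in>UNIV. (1/2 * phi v a b) *\<^sub>R u a b)" by (rule frame)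
    also have "\<dots> \<in> span J" by (intro span_sum span_mul span_base uJ)
    finally show ?thesis using J span_eq_iff by blast
  qed
  then show ?thesis by auto
qed

lemma adm_add: "adm (x + y) = adm x + adm y"
  unfolding adm_def by (simp add: Finite_Cartesian_Product.vec_eq_iff distrib_right sum.distrib)
lemma adm_scale: "adm (c *\<^sub>R x) = c *\<^sub>R adm x"
  unfolding adm_def by (simp add: Finite_Cartesian_Product.vec_eq_iff sum_distrib_left mult.assoc)
lemma trace_scale: "trace (c *\<^sub>R (A::real^'n^'n)) = c * trace A"
  by (simp add: trace_def sum_distrib_left)

lemma kappa_add1: "kappa (x + x') y = kappa x y + kappa x' y"
  unfolding kappa_def adm_add mmul_add_left trace_add ..
lemma kappa_scale1: "kappa (c *\<^sub>R x) y = c * kappa x y"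
  unfolding kappa_def adm_scale scalar_matrix_assoc[symmetric] trace_scale ..
lemma kappa_add2: "kappa y (x + x') = kappa y x + kappa y x'"
  unfolding kappa_def adm_add matrix_add_ldistrib trace_add ..
lemma kappa_scale2: "kappa y (c *\<^sub>R x) = c * kappa y x"
  unfolding kappa_def adm_scale matrix_scalar_ac trace_scale scalar_matrix_assoc[symmetric] ..

lemma LL_diag: "L a b a b = (if a = b then 0 else 1)"
  unfolding L_def by simp

lemma kappa_u01: "kappa (u 0 1) (u 0 1) = -6"
proof -
  have "kappa (u 0 1) (u 0 1) = (\<Sum>a\<in>UNIV. \<Sum>b\<in>UNIV. 1/2 * (ev 0 1 a b * (if a = b then 0 else 1)))"
    unfolding kappa_frame phi_u ev_lemma[OF L_so zero_neq_one] LL_diag ..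
  also have "\<dots> = -6"
    unfolding u5 by (simp add: ev_def sgv)
  finally show ?thesis .
qed

lemma kappa_nd: assumes "\<And>y. kappa x y = 0" shows "x = 0"
proof (rule ccontr)
  assume xnz: "x \<noteq> 0"
  define R where "R = {v. \<forall>y. kappa v y = 0}"
  have sub: "Real_Vector_Spaces.subspace R"
    unfolding Real_Vector_Spaces.subspace_def R_def
    using kappa_scale1[of 0] by (simp add: kappa_add1 kappa_scale1)
  have cl: "br z v \<in> R" if "v \<in> R" for z v
    using that unfolding R_def by (simp add: kappa_inv)
  have "R = UNIV" by (rule g_simple[OF sub cl]) (use assms xnz R_def in auto)
  then have "kappa (u 0 1) (u 0 1) = 0" unfolding R_def by auto
  then show False using kappa_u01 by simp
qed

lemma perfect: "span (range (\<lambda>p. br (fst p) (snd p))) = UNIV"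
proof -
  define P where "P = span (range (\<lambda>p. br (fst p) (snd p)))"
  have sub: "Real_Vector_Spaces.subspace P" unfolding P_def by simp
  have cl: "br z w \<in> P" for z w
    unfolding P_def by (rule span_base) (use rangeI[of "\<lambda>p. br (fst p) (snd p)" "(z,w)"] in simp)
  have e: "br (u 0 1) (u 1 2) = u 0 2"
  proof (rule phi_inj)
    show "phi (br (u 0 1) (u 1 2)) = phi (u 0 2)"
      unfolding phi_br phi_u by (rule LLb) simp_all
  qed
  have nz: "u 0 2 \<noteq> 0"
  proof
    assume "u 0 2 = 0"
    then have "phi (u 0 2) 0 2 = 0" unfolding phi_def by simp
    then show False unfolding phi_u L_def by simp
  qed
  have "P = UNIV" by (rule g_simple[OF sub cl cl[of "u 0 1" "u 1 2", unfolded e] nz])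
  then show ?thesis unfolding P_def .
qed

lemma adm_diff: "adm (x - y) = adm x - adm y"
  unfolding adm_def by (simp add: Finite_Cartesian_Product.vec_eq_iff left_diff_distrib sum_subtractf)

lemma kappa_sym: "kappa x y = kappa y x"
  unfolding kappa_def by (rule trace_mul_sym)

lemma kappa_diff1: "kappa (x - x') y = kappa x y - kappa x' y"
  unfolding kappa_def adm_diff mmul_sub_left trace_sub ..

lemma kappa_linear2: "linear (kappa b)"
  by (rule linearI) (simp_all add: kappa_add2 kappa_scale2)

lemma Basis_axis: "(v::real^'n) \<in> Basis \<Longrightarrow> \<exists>i. v = axis i 1"
  unfolding Basis_vec_def by auto

lemma kappa_repr:
  assumes lf: "linear f"
  shows "\<exists>b. \<forall>x. kappa b x = f x"
proof -
  define K where "K b = (\<chi> l. kappa b (axis l 1))" for b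
  have lK: "linear K"
    by (rule linearI) (simp_all add: K_def Finite_Cartesian_Product.vec_eq_iff kappa_add1 kappa_scale1)
  have iK: "inj K"
  proof (rule injI)
    fix b b'
    assume h: "K b = K b'"
    have z: "kappa (b - b') (axis l 1) = 0" for l
      using h unfolding K_def Finite_Cartesian_Product.vec_eq_iff kappa_diff1 by simp
    have "kappa (b - b') = (\<lambda>y. 0)"
    proof (rule linear_eq_stdbasis[OF kappa_linear2])
      show "linear (\<lambda>y::real^10. 0::real)" by (rule linearI) simp_all
      fix v :: "real^10" assume "v \<in> Basis"
      then obtain l where "v = axis l 1" using Basis_axis by blast
      then show "kappa (b - b') v = 0" using z by simp
    qed
    then have "b - b' = 0" by (intro kappa_nd) metis
    then show "b = b'" by simp
  qed
  have "surj K" by (rule linear_injective_imp_surjective[OF lK iK]) simp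
  then obtain b where b: "K b = (\<chi> l. f (axis l 1))" by (metis surjD)
  have "kappa b = f"
  proof (rule linear_eq_stdbasis[OF kappa_linear2 lf])
    fix v :: "real^10" assume "v \<in> Basis"
    then obtain l where "v = axis l 1" using Basis_axis by blast
    moreover have "kappa b (axis l 1) = f (axis l 1)"
      using b unfolding K_def Finite_Cartesian_Product.vec_eq_iff by simp
    ultimately show "kappa b v = f v" by simp
  qed
  then show ?thesis by auto
qed

lemma deriv_inner:
  assumes der: "\<And>x y. D *v br x y = br (D *v x) y + br x (D *v y)"
  shows "\<exists>b. D = adm b"
proof -
  define f where "f x = trace (adm x ** D)" for x
  have lf: "linear f"
    by (rule linearI) (simp_all add: f_def adm_add adm_scale mmul_add_left trace_add
        scalar_matrix_assoc[symmetric] trace_scale)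
  obtain b where b: "\<And>x. kappa b x = f x" using kappa_repr[OF lf] by blast
  define D' where "D' = D - adm b"
  have derD: "adm (D *v x) = D ** adm x - adm x ** D" for x
  proof -
    have "adm (D *v x) *v y = (D ** adm x - adm x ** D) *v y" for y
      using der[of x y] unfolding br_def matrix_vector_mult_diff_rdistrib
        matrix_vector_mul_assoc[symmetric] by (simp add: algebra_simps)
    then show ?thesis by (simp add: matrix_eq)
  qed
  have derb: "adm (adm b *v x) = adm b ** adm x - adm x ** adm b" for x
    using jacobi[of b x] unfolding br_def .
  have derD': "adm (D' *v x) = D' ** adm x - adm x ** D'" for x
    unfolding D'_def matrix_vector_mult_diff_rdistrib adm_diff derD derb mmul_sub_left mmul_sub_right
    by simp
  have tr0: "trace (adm x ** D') = 0" for x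
  proof -
    have "trace (adm x ** D') = f x - kappa x b"
      unfolding D'_def mmul_sub_right trace_sub f_def kappa_def ..
    then show ?thesis using b[of x] kappa_sym[of x b] by simp
  qed
  have k0: "kappa (D' *v x) (br y z) = 0" for x y z
  proof -
    let ?X = "adm y" and ?Y = "adm z" and ?A = "adm x"
    have "kappa (D' *v x) (br y z) = trace ((D' ** ?A - ?A ** D') ** (?X ** ?Y - ?Y ** ?X))"
      unfolding kappa_def derD' jacobi ..
    also have "\<dots> = trace (D' ** (?A ** (?X ** ?Y - ?Y ** ?X))) - trace (D' ** ((?X ** ?Y - ?Y ** ?X) ** ?A))"
    proof -
      let ?T = "?X ** ?Y - ?Y ** ?X"
      have c: "trace (?A ** D' ** ?T) = trace (D' ** (?T ** ?A))"
      proof -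
        have "trace (?A ** D' ** ?T) = trace (?A ** (D' ** ?T))" by (simp add: matrix_mul_assoc)
        also have "\<dots> = trace ((D' ** ?T) ** ?A)" by (rule trace_mul_sym)
        also have "\<dots> = trace (D' ** (?T ** ?A))" by (simp add: matrix_mul_assoc)
        finally show ?thesis .
      qed
      have "trace ((D' ** ?A - ?A ** D') ** ?T) = trace (D' ** ?A ** ?T) - trace (?A ** D' ** ?T)"
        unfolding mmul_sub_left trace_sub ..
      then show ?thesis unfolding c by (simp add: matrix_mul_assoc)
    qed
    also have "\<dots> = trace (D' ** adm (br x (br y z)))"
      by (simp only: jacobi[of x "br y z"] jacobi[of y z] mmul_sub_right trace_sub)
    also have "\<dots> = trace (adm (br x (br y z)) ** D')" by (rule trace_mul_sym)
    also have "\<dots> = 0" by (rule tr0)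
    finally show ?thesis .
  qed
  have D'0: "D' *v x = 0" for x
  proof (rule kappa_nd)
    fix w
    define S where "S = {w. kappa (D' *v x) w = 0}"
    have subS: "Real_Vector_Spaces.subspace S"
      unfolding Real_Vector_Spaces.subspace_def S_def
      using kappa_scale2[of _ 0] by (simp add: kappa_add2 kappa_scale2)
    have "range (\<lambda>p. br (fst p) (snd p)) \<subseteq> S" unfolding S_def using k0 by auto
    then have "span (range (\<lambda>p. br (fst p) (snd p))) \<subseteq> S"
      using subS by (rule span_minimal)
    then have "S = UNIV" unfolding perfect by auto
    then show "kappa (D' *v x) w = 0" unfolding S_def by auto
  qed
  have "D' = 0" using D'0 by (simp add: matrix_eq)
  then show ?thesis unfolding D'_def by auto
qed

end

definition mv :: "(4 \<Rightarrow> 4 \<Rightarrow> real) \<Rightarrow> real^4 \<Rightarrow> real^4" where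
  "mv A v = (\<chi> a. \<Sum>b\<in>UNIV. A a b * v$b)"

lemma mv_mm: "mv (mm A B) v = mv A (mv B v)"
proof -
  have "(\<Sum>b\<in>UNIV. (\<Sum>c\<in>UNIV. A a c * B c b) * v $ b) = (\<Sum>c\<in>UNIV. A a c * (\<Sum>b\<in>UNIV. B c b * v $ b))" for a
  proof -
    have "(\<Sum>b\<in>UNIV. (\<Sum>c\<in>UNIV. A a c * B c b) * v $ b) = (\<Sum>b\<in>UNIV. \<Sum>c\<in>UNIV. A a c * B c b * v $ b)"
      by (simp add: sum_distrib_right)
    also have "\<dots> = (\<Sum>c\<in>UNIV. \<Sum>b\<in>UNIV. A a c * B c b * v $ b)" by (rule sum.swap)
    also have "\<dots> = (\<Sum>c\<in>UNIV. A a c * (\<Sum>b\<in>UNIV. B c b * v $ b))" by (simp add: sum_distrib_left mult.assoc)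
    finally show ?thesis .
  qed
  then show ?thesis unfolding mv_def mm_def by simp
qed

lemma mv_add: "mv A (v + w) = mv A v + mv A w"
  unfolding mv_def by (simp add: Finite_Cartesian_Product.vec_eq_iff distrib_left sum.distrib)
lemma mv_scale: "mv A (c *\<^sub>R v) = c *\<^sub>R mv A v"
  unfolding mv_def by (simp add: Finite_Cartesian_Product.vec_eq_iff sum_distrib_left algebra_simps)
lemma mv_linear: "linear (mv A)"
  by (rule linearI) (simp_all add: mv_add mv_scale)
lemma mv_zero[simp]: "mv A 0 = 0"
  unfolding mv_def by (simp add: Finite_Cartesian_Product.vec_eq_iff)
lemma mv_axis: "mv A (axis b 1) $ a = A a b"
  unfolding mv_def by (simp add: axis_def ifz1 sum.delta)

lemma mv_eq: "(\<And>v. mv A v = mv B v) \<Longrightarrow> A = B"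
proof (intro ext)
  fix a b assume "\<And>v. mv A v = mv B v"
  then have "mv A (axis b 1) $ a = mv B (axis b 1) $ a" by simp
  then show "A a b = B a b" unfolding mv_axis .
qed

lemma spin_act_mv: "spin_act Ts i v = mv (\<lambda>a b. Ts a i b) v"
  unfolding spin_act_def mv_def ..

context lsetup
begin

definition rho :: "real^10 \<Rightarrow> 4 \<Rightarrow> 4 \<Rightarrow> real" where
  "rho x = (\<lambda>a b. \<Sum>i\<in>UNIV. x$i * Ts a i b)"

lemma rep': "mc (\<lambda>a b. Ts a i b) (\<lambda>a b. Ts a j b) a b = (\<Sum>k\<in>UNIV. Tv k i j * Ts a k b)"
  using rep unfolding is_rep_def mc_def mm_def by simp

lemma rho_br: "rho (br x y) = mc (rho x) (rho y)"
proof (intro ext)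
  fix a b
  have "rho (br x y) a b = (\<Sum>k\<in>UNIV. \<Sum>i\<in>UNIV. \<Sum>j\<in>UNIV. x$i * y$j * (Tv k i j * Ts a k b))"
    unfolding rho_def br_comp by (simp add: sum_distrib_left sum_distrib_right algebra_simps)
  also have "\<dots> = (\<Sum>i\<in>UNIV. \<Sum>k\<in>UNIV. \<Sum>j\<in>UNIV. x$i * y$j * (Tv k i j * Ts a k b))"
    by (rule sum.swap)
  also have "\<dots> = (\<Sum>i\<in>UNIV. \<Sum>j\<in>UNIV. \<Sum>k\<in>UNIV. x$i * y$j * (Tv k i j * Ts a k b))"
    by (rule sum.cong[OF refl], rule sum.swap)
  also have "\<dots> = (\<Sum>i\<in>UNIV. \<Sum>j\<in>UNIV. x$i * y$j * mc (\<lambda>a b. Ts a i b) (\<lambda>a b. Ts a j b) a b)"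
    unfolding rep' by (simp add: sum_distrib_left)
  also have "\<dots> = mc (rho x) (rho y) a b"
    unfolding mc_def rho_def
    by (simp add: mm_bilin right_diff_distrib sum_subtractf algebra_simps)
       (subst (2) sum.swap, simp add: algebra_simps)
  finally show "rho (br x y) a b = mc (rho x) (rho y) a b" .
qed

lemma rho_add: "rho (x + y) = (\<lambda>a b. rho x a b + rho y a b)"
  unfolding rho_def by (intro ext) (simp add: distrib_right sum.distrib)
lemma rho_scale: "rho (c *\<^sub>R x) = (\<lambda>a b. c * rho x a b)"
  unfolding rho_def by (intro ext) (simp add: sum_distrib_left mult.assoc)
lemma rho_diff: "rho (x - y) = (\<lambda>a b. rho x a b - rho y a b)"
  unfolding rho_def by (intro ext) (simp add: left_diff_distrib sum_subtractf)
lemma rho_axis: "rho (axis i 1) = (\<lambda>a b. Ts a i b)"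
  unfolding rho_def by (intro ext) (simp add: axis_def ifz2 sum.delta)

lemma rho_inj0: "rho x = (\<lambda>a b. 0) \<Longrightarrow> x = 0"
proof (rule ccontr)
  assume h: "rho x = (\<lambda>a b. 0)" and xnz: "x \<noteq> 0"
  define K where "K = {x. rho x = (\<lambda>a b. 0)}"
  have sub: "Real_Vector_Spaces.subspace K"
    unfolding Real_Vector_Spaces.subspace_def K_def
    by (simp add: rho_add rho_scale) (simp add: rho_def)
  have cl: "br z v \<in> K" if "v \<in> K" for z v
    using that unfolding K_def by (simp add: rho_br mc_def mm_def)
  have "K = UNIV" by (rule g_simple[OF sub cl]) (use h xnz K_def in auto)
  have T0: "Ts a i b = 0" for a i b
  proof -
    have "axis i 1 \<in> K" using \<open>K = UNIV\<close> by simp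
    then have "rho (axis i 1) = (\<lambda>a b. 0)" unfolding K_def by simp
    then have "rho (axis i 1) a b = 0" by simp
    then show ?thesis unfolding rho_axis .
  qed
  define W where "W = {v::real^4. v $ 0 = 0}"
  have subW: "Real_Vector_Spaces.subspace W"
    unfolding Real_Vector_Spaces.subspace_def W_def by simp
  have invW: "\<forall>i. \<forall>v\<in>W. spin_act Ts i v \<in> W"
    unfolding W_def spin_act_def by (simp add: T0)
  have "W = {0} \<or> W = UNIV" using irr subW invW unfolding irreducible_rep_def by simp
  moreover have a1: "axis 1 1 \<in> W" "axis 1 (1::real) \<noteq> 0"
    unfolding W_def by (simp add: axis_def) simp
  moreover have a0: "axis 0 (1::real) \<notin> W" unfolding W_def by (simp add: axis_def)
  ultimately show False
  proof -
    have "W \<noteq> {0}" using a1 by blast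
    moreover have "W \<noteq> UNIV" using a0 by blast
    ultimately show False using \<open>W = {0} \<or> W = UNIV\<close> by blast
  qed
qed

lemma rho_inj: "rho x = rho y \<Longrightarrow> x = y"
proof -
  assume "rho x = rho y"
  then have "rho (x - y) = (\<lambda>a b. 0)" unfolding rho_diff by (simp add: fun_eq_iff)
  then have "x - y = 0" by (rule rho_inj0)
  then show "x = y" by simp
qed

end

lemma u4: "(UNIV::4 set) = {0,1,2,3}"
proof -
  have "x \<in> {0,1,2,3}" for x :: 4
  proof (cases x rule: bit0_cases)
    case (of_int z)
    then have "z = 0 \<or> z = 1 \<or> z = 2 \<or> z = 3" by auto
    then show ?thesis using of_int by auto
  qed
  then show ?thesis by auto
qed

definition ix :: "4 \<Rightarrow> nat" where
  "ix a = (if a = 0 then 0 else if a = 1 then 1 else if a = 2 then 2 else 3)"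

lemma ix_lt: "ix a < 4" unfolding ix_def by simp
lemma of_nat_ix: "of_nat (ix a) = a"
proof -
  have "a \<in> {0,1,2,3}" using u4 by auto
  then show ?thesis unfolding ix_def by auto
qed
lemma ix_of_nat: "i < 4 \<Longrightarrow> ix (of_nat i) = i"
proof -
  assume "i < 4"
  then have "i = 0 \<or> i = 1 \<or> i = 2 \<or> i = 3" by auto
  then show ?thesis unfolding ix_def by auto
qed

lemma sum4_nat: "(\<Sum>j\<in>{0..<4::nat}. g j) = (\<Sum>b\<in>(UNIV::4 set). g (ix b))"
proof -
  have "(\<Sum>b\<in>(UNIV::4 set). g (ix b)) = (\<Sum>j\<in>ix ` UNIV. g j)"
    by (rule sum.reindex_cong[symmetric]) (auto intro: inj_onI simp: inj_on_def, metis of_nat_ix)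
  also have "ix ` UNIV = {0..<4}"
  proof
    show "ix ` UNIV \<subseteq> {0..<4}" using ix_lt by auto
    show "{0..<4} \<subseteq> ix ` UNIV"
    proof
      fix i :: nat assume "i \<in> {0..<4}"
      then have "ix (of_nat i) = i" using ix_of_nat by auto
      then show "i \<in> ix ` UNIV" by (metis rangeI)
    qed
  qed
  finally show ?thesis by simp
qed

lemma complex_eig:
  fixes N :: "4 \<Rightarrow> 4 \<Rightarrow> real"
  shows "\<exists>re im :: real^4. \<exists>\<alpha> \<beta>. (re \<noteq> 0 \<or> im \<noteq> 0) \<and> mv N re = \<alpha> *\<^sub>R re - \<beta> *\<^sub>R im
     \<and> mv N im = \<beta> *\<^sub>R re + \<alpha> *\<^sub>R im"
proof -
  define A where "A = Matrix.mat 4 4 (\<lambda>(i,j). complex_of_real (N (of_nat i) (of_nat j)))"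
  have A: "A \<in> carrier_mat 4 4" unfolding A_def by simp
  from spectrum_non_empty[OF A] obtain k where "k \<in> spectrum A" by auto
  then obtain v where ev: "eigenvector A v k" unfolding spectrum_def eigenvalue_def by auto
  then have vc: "v \<in> carrier_vec 4" and vnz: "v \<noteq> 0\<^sub>v 4" and Av: "A *\<^sub>v v = k \<cdot>\<^sub>v v"
    unfolding eigenvector_def using A by auto
  define cv where "cv a = v $ ix a" for a
  have eq: "(\<Sum>b\<in>UNIV. complex_of_real (N a b) * cv b) = k * cv a" for a
  proof -
    have "(A *\<^sub>v v) $ ix a = (k \<cdot>\<^sub>v v) $ ix a" using Av by simp
    moreover have "(A *\<^sub>v v) $ ix a = (\<Sum>b\<in>UNIV. complex_of_real (N a b) * cv b)"
      using A vc ix_lt[of a]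
      by (simp add: A_def scalar_prod_def sum4_nat of_nat_ix cv_def row_def)
    moreover have "(k \<cdot>\<^sub>v v) $ ix a = k * cv a" using vc ix_lt[of a] by (simp add: cv_def)
    ultimately show ?thesis by simp
  qed
  define re :: "real^4" where "re = (\<chi> a. Re (cv a))"
  define im :: "real^4" where "im = (\<chi> a. Im (cv a))"
  have nz: "re \<noteq> 0 \<or> im \<noteq> 0"
  proof (rule ccontr)
    assume "\<not> (re \<noteq> 0 \<or> im \<noteq> 0)"
    then have "cv a = 0" for a
      unfolding re_def im_def Finite_Cartesian_Product.vec_eq_iff by (simp add: complex_eq_iff)
    then have "v = 0\<^sub>v 4"
      using vc by (intro eq_vecI) (auto simp: cv_def, metis ix_of_nat)
    then show False using vnz by simp
  qed
  have r1: "mv N re = Re k *\<^sub>R re - Im k *\<^sub>R im"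
    unfolding Finite_Cartesian_Product.vec_eq_iff
  proof
    fix a
    have "Re (\<Sum>b\<in>UNIV. complex_of_real (N a b) * cv b) = Re (k * cv a)" using eq by simp
    then show "mv N re $ a = (Re k *\<^sub>R re - Im k *\<^sub>R im) $ a"
      unfolding mv_def re_def im_def by (simp add: Re_sum)
  qed
  have r2: "mv N im = Im k *\<^sub>R re + Re k *\<^sub>R im"
    unfolding Finite_Cartesian_Product.vec_eq_iff
  proof
    fix a
    have "Im (\<Sum>b\<in>UNIV. complex_of_real (N a b) * cv b) = Im (k * cv a)" using eq by simp
    then show "mv N im $ a = (Im k *\<^sub>R re + Re k *\<^sub>R im) $ a"
      unfolding mv_def re_def im_def by (simp add: Im_sum)
  qed
  show ?thesis using nz r1 r2 by blast
qed

definition idm :: "real \<Rightarrow> 4 \<Rightarrow> 4 \<Rightarrow> real" where "idm c = (\<lambda>a b. c * (if a = b then 1 else 0))"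

lemma mv_idm: "mv (idm c) w = c *\<^sub>R w"
  unfolding mv_def idm_def by (simp add: Finite_Cartesian_Product.vec_eq_iff ifz1 ifz2 sum.delta mult.assoc)

lemma mv_fadd: "mv (\<lambda>a b. A a b + B a b) w = mv A w + mv B w"
  unfolding mv_def by (simp add: Finite_Cartesian_Product.vec_eq_iff distrib_right sum.distrib)
lemma mv_fdiff: "mv (\<lambda>a b. A a b - B a b) w = mv A w - mv B w"
  unfolding mv_def by (simp add: Finite_Cartesian_Product.vec_eq_iff left_diff_distrib sum_subtractf)
lemma mv_fscale: "mv (\<lambda>a b. c * A a b) w = c *\<^sub>R mv A w"
  unfolding mv_def by (simp add: Finite_Cartesian_Product.vec_eq_iff sum_distrib_left mult.assoc)

context lsetup
begin

abbreviation TT :: "10 \<Rightarrow> 4 \<Rightarrow> 4 \<Rightarrow> real" where "TT i \<equiv> (\<lambda>a b. Ts a i b)"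

lemma mv_rho: "mv (rho x) w = (\<Sum>i\<in>UNIV. x$i *\<^sub>R mv (TT i) w)"
proof -
  have "(\<Sum>b\<in>UNIV. (\<Sum>i\<in>UNIV. x $ i * Ts a i b) * w $ b) = (\<Sum>i\<in>UNIV. x $ i * (\<Sum>b\<in>UNIV. Ts a i b * w $ b))" for a
  proof -
    have "(\<Sum>b\<in>UNIV. (\<Sum>i\<in>UNIV. x $ i * Ts a i b) * w $ b) = (\<Sum>b\<in>UNIV. \<Sum>i\<in>UNIV. x $ i * Ts a i b * w $ b)"
      by (simp add: sum_distrib_right)
    also have "\<dots> = (\<Sum>i\<in>UNIV. \<Sum>b\<in>UNIV. x $ i * Ts a i b * w $ b)" by (rule sum.swap)
    finally show ?thesis by (simp add: sum_distrib_left mult.assoc)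
  qed
  then show ?thesis unfolding mv_def rho_def by (simp add: Finite_Cartesian_Product.vec_eq_iff sum_component)
qed

lemma eig_scalar:
  assumes comm: "\<And>i w. mv N (mv (TT i) w) = mv (TT i) (mv N w)"
    and v: "v \<noteq> 0" "mv N v = l *\<^sub>R v"
  shows "N = idm l"
proof -
  define W where "W = {w. mv N w = l *\<^sub>R w}"
  have sub: "Real_Vector_Spaces.subspace W"
    unfolding Real_Vector_Spaces.subspace_def W_def by (simp add: mv_add mv_scale algebra_simps)
  have inv: "\<forall>i. \<forall>w\<in>W. spin_act Ts i w \<in> W"
    unfolding W_def spin_act_mv by (simp add: comm mv_scale)
  have "W = {0} \<or> W = UNIV" using irr sub inv unfolding irreducible_rep_def by simp
  moreover have "v \<in> W" unfolding W_def using v by simp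
  ultimately have "W = UNIV" using v(1) by auto
  then have "mv N w = mv (idm l) w" for w unfolding W_def mv_idm by auto
  then show ?thesis by (rule mv_eq)
qed

lemma rho_comm:
  assumes comm: "\<And>i w. mv J (mv (TT i) w) = mv (TT i) (mv J w)"
  shows "mv J (mv (rho x) w) = mv (rho x) (mv J w)"
  unfolding mv_rho linear_sum[OF mv_linear] linear_scale[OF mv_linear] comm ..

lemma J_false:
  assumes comm: "\<And>i w. mv J (mv (TT i) w) = mv (TT i) (mv J w)"
    and JJ: "\<And>w. mv J (mv J w) = - w"
  shows False
proof -
  define v1 :: "real^4" where "v1 = axis 0 1"
  define w1 where "w1 = mv J v1"
  have v1nz: "v1 \<noteq> 0" unfolding v1_def by simp
  have Jw1: "mv J w1 = - v1" unfolding w1_def JJ ..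
  have ind: "a = 0 \<and> b = 0" if h: "a *\<^sub>R v1 + b *\<^sub>R w1 = 0" for a b
  proof -
    have b0: "b = 0"
    proof (rule ccontr)
      assume bnz: "b \<noteq> 0"
      have "b *\<^sub>R w1 = - (a *\<^sub>R v1)" using h by (simp add: eq_neg_iff_add_eq_0 add.commute)
      then have "(1/b) *\<^sub>R (b *\<^sub>R w1) = (1/b) *\<^sub>R (- (a *\<^sub>R v1))" by simp
      then have w1e: "w1 = (- a / b) *\<^sub>R v1" using bnz by simp
      have "- v1 = mv J w1" using Jw1 by simp
      also have "\<dots> = mv J ((- a / b) *\<^sub>R v1)" using w1e by simp
      also have "\<dots> = (- a / b) *\<^sub>R mv J v1" by (rule mv_scale)
      also have "\<dots> = (- a / b) *\<^sub>R ((- a / b) *\<^sub>R v1)" using w1e unfolding w1_def by simp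
      also have "\<dots> = ((- a / b) * (- a / b)) *\<^sub>R v1" by simp
      finally have e: "- v1 = ((- a / b) * (- a / b)) *\<^sub>R v1" .
      have "(1 + (- a / b) * (- a / b)) *\<^sub>R v1 = v1 + ((- a / b) * (- a / b)) *\<^sub>R v1"
        by (simp only: scaleR_add_left scaleR_one)
      also have "\<dots> = v1 + - v1" unfolding e ..
      also have "\<dots> = 0" by simp
      finally have "(1 + (- a / b) * (- a / b)) *\<^sub>R v1 = 0" .
      moreover have "1 + (- a / b) * (- a / b) \<noteq> 0"
        using zero_le_square[of "- a / b"] by linarith
      ultimately show False using v1nz by simp
    qed
    then have "a *\<^sub>R v1 = 0" using h by simp
    then show ?thesis using v1nz b0 by simp
  qed
  have "dim (span {v1, w1}) \<le> 2"
  proof -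
    have "dim (span {v1, w1}) \<le> card {v1, w1}" using dim_le_card[of "span {v1,w1}" "{v1,w1}"] by simp
    also have "\<dots> \<le> 2" by (simp add: card_insert_le_m1)
    finally show ?thesis .
  qed
  then have "span {v1, w1} \<noteq> UNIV"
  proof (intro notI)
    assume "dim (span {v1, w1}) \<le> 2" "span {v1, w1} = UNIV"
    then have "dim (UNIV::(real^4) set) \<le> 2" by simp
    then show False by simp
  qed
  then obtain v2 where v2: "v2 \<notin> span {v1, w1}" by auto
  define w2 where "w2 = mv J v2"
  have Jw2: "mv J w2 = - v2" unfolding w2_def JJ ..
  define Psi :: "real^4 \<Rightarrow> real^4" where
    "Psi c = c$0 *\<^sub>R v1 + c$1 *\<^sub>R w1 + c$2 *\<^sub>R v2 + c$3 *\<^sub>R w2" for c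
  have lPsi: "linear Psi"
    by (rule linearI) (simp_all add: Psi_def algebra_simps)
  have iPsi: "inj Psi"
  proof -
    have "c = 0" if h: "Psi c = 0" for c
    proof -
      let ?c0 = "c$0" and ?c1 = "c$1" and ?p = "c$2" and ?q = "c$3"
      have I: "?c0 *\<^sub>R v1 + ?c1 *\<^sub>R w1 + ?p *\<^sub>R v2 + ?q *\<^sub>R w2 = 0" using h unfolding Psi_def .
      have "mv J (?c0 *\<^sub>R v1 + ?c1 *\<^sub>R w1 + ?p *\<^sub>R v2 + ?q *\<^sub>R w2) = 0" unfolding I by simp
      then have II: "?c0 *\<^sub>R w1 - ?c1 *\<^sub>R v1 + ?p *\<^sub>R w2 - ?q *\<^sub>R v2 = 0"
        unfolding mv_add mv_scale Jw1 Jw2 by (simp add: w1_def w2_def algebra_simps)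
      have "?p *\<^sub>R (?c0 *\<^sub>R v1 + ?c1 *\<^sub>R w1 + ?p *\<^sub>R v2 + ?q *\<^sub>R w2)
          - ?q *\<^sub>R (?c0 *\<^sub>R w1 - ?c1 *\<^sub>R v1 + ?p *\<^sub>R w2 - ?q *\<^sub>R v2) = 0" unfolding I II by simp
      then have III: "(?p * ?p + ?q * ?q) *\<^sub>R v2 = - ((?p * ?c0 + ?q * ?c1) *\<^sub>R v1 + (?p * ?c1 - ?q * ?c0) *\<^sub>R w1)"
        by (simp add: algebra_simps)
      have pq: "?p = 0 \<and> ?q = 0"
      proof (rule ccontr)
        assume "\<not> (?p = 0 \<and> ?q = 0)"
        then have nz: "?p * ?p + ?q * ?q \<noteq> 0" by (simp add: add_nonneg_eq_0_iff)
        have "- ((?p * ?c0 + ?q * ?c1) *\<^sub>R v1 + (?p * ?c1 - ?q * ?c0) *\<^sub>R w1) \<in> span {v1, w1}"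
          by (intro span_neg span_add span_mul span_base) auto
        then have sv: "(?p * ?p + ?q * ?q) *\<^sub>R v2 \<in> span {v1, w1}" unfolding III .
        define t where "t = ?p * ?p + ?q * ?q"
        have "t *\<^sub>R v2 \<in> span {v1, w1}" using sv unfolding t_def .
        then have "(1 / t) *\<^sub>R (t *\<^sub>R v2) \<in> span {v1, w1}" by (rule span_mul)
        moreover have "t \<noteq> 0" using nz unfolding t_def .
        ultimately have "v2 \<in> span {v1, w1}" by simp
        then show False using v2 by simp
      qed
      then have "?c0 *\<^sub>R v1 + ?c1 *\<^sub>R w1 = 0" using I by simp
      then have "?c0 = 0 \<and> ?c1 = 0" by (rule ind)
      then show "c = 0" using pq unfolding Finite_Cartesian_Product.vec_eq_iff
      proof (intro allI)
        fix i :: 4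
        assume "?c0 = 0 \<and> ?c1 = 0" "?p = 0 \<and> ?q = 0"
        moreover have "i \<in> {0,1,2,3}" using u4 by auto
        ultimately show "c $ i = 0 $ i" by auto
      qed
    qed
    then show ?thesis unfolding linear_injective_0[OF lPsi] by blast
  qed
  have sPsi: "surj Psi" by (rule linear_injective_imp_surjective[OF lPsi iPsi]) simp
  define Phi :: "real^10 \<Rightarrow> (real^4) \<times> (real^4)" where "Phi x = (mv (rho x) v1, mv (rho x) v2)" for x
  have rho_lin: "mv (rho x) w = (\<Sum>i\<in>UNIV. x$i *\<^sub>R mv (TT i) w)" for x w by (rule mv_rho)
  have lPhi: "linear Phi"
    by (rule linearI) (simp_all add: Phi_def rho_lin algebra_simps scaleR_sum_right sum.distrib)
  have iPhi: "inj Phi"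
  proof -
    have "x = 0" if h: "Phi x = 0" for x
    proof -
      have a: "mv (rho x) v1 = 0" "mv (rho x) v2 = 0" using h unfolding Phi_def by (simp_all add: zero_prod_def)
      have b: "mv (rho x) w1 = 0" "mv (rho x) w2 = 0"
        unfolding w1_def w2_def rho_comm[OF comm, symmetric] a by simp_all
      have "mv (rho x) w = 0" for w
      proof -
        obtain c where "w = Psi c" using sPsi unfolding surj_def by blast
        then show ?thesis unfolding Psi_def by (simp add: mv_add mv_scale a b)
      qed
      then have "rho x = (\<lambda>a b. 0)" by (intro mv_eq) (simp add: mv_def Finite_Cartesian_Product.vec_eq_iff)
      then show "x = 0" by (rule rho_inj0)
    qed
    then show ?thesis unfolding linear_injective_0[OF lPhi] by blast
  qed
  have "dim (Phi ` UNIV) = dim (UNIV :: (real^10) set)"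
    by (rule dim_image_eq[OF lPhi]) (use iPhi in \<open>auto simp: inj_on_def inj_def\<close>)
  then have "dim (Phi ` UNIV) = 10" by simp
  moreover have "dim (Phi ` UNIV) \<le> 8" using dim_subset_UNIV[of "Phi ` UNIV"] by simp
  ultimately show False by simp
qed

end

lemma mv_diff: "mv A (v - w) = mv A v - mv A w"
  by (rule linear_diff[OF mv_linear])

lemma mm_lin_right: "mm A (\<lambda>a b. \<Sum>i\<in>UNIV. f i * B i a b) = (\<lambda>a b. \<Sum>i\<in>UNIV. f i * mm A (B i) a (b::'n::finite))"
proof (intro ext)
  fix a b
  have "mm A (\<lambda>a b. \<Sum>i\<in>UNIV. f i * B i a b) a b = (\<Sum>c\<in>UNIV. \<Sum>i\<in>UNIV. f i * (A a c * B i c b))"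
    unfolding mm_def by (simp add: sum_distrib_left algebra_simps)
  also have "\<dots> = (\<Sum>i\<in>UNIV. \<Sum>c\<in>UNIV. f i * (A a c * B i c b))" by (rule sum.swap)
  also have "\<dots> = (\<Sum>i\<in>UNIV. f i * mm A (B i) a b)" unfolding mm_def by (simp add: sum_distrib_left)
  finally show "mm A (\<lambda>a b. \<Sum>i\<in>UNIV. f i * B i a b) a b = (\<Sum>i\<in>UNIV. f i * mm A (B i) a b)" .
qed

lemma mm_lin_left: "mm (\<lambda>a b. \<Sum>i\<in>UNIV. f i * B i a b) A = (\<lambda>a b. \<Sum>i\<in>UNIV. f i * mm (B i) A a (b::'n::finite))"
proof (intro ext)
  fix a b
  have "mm (\<lambda>a b. \<Sum>i\<in>UNIV. f i * B i a b) A a b = (\<Sum>c\<in>UNIV. \<Sum>i\<in>UNIV. f i * (B i a c * A c b))"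
    unfolding mm_def by (simp add: sum_distrib_left sum_distrib_right algebra_simps)
  also have "\<dots> = (\<Sum>i\<in>UNIV. \<Sum>c\<in>UNIV. f i * (B i a c * A c b))" by (rule sum.swap)
  also have "\<dots> = (\<Sum>i\<in>UNIV. f i * mm (B i) A a b)" unfolding mm_def by (simp add: sum_distrib_left)
  finally show "mm (\<lambda>a b. \<Sum>i\<in>UNIV. f i * B i a b) A a b = (\<Sum>i\<in>UNIV. f i * mm (B i) A a b)" .
qed

lemma mc_deriv: "mc M (mc X Y) = (\<lambda>a b. mc (mc M X) Y a b + mc X (mc M (Y::'n::finite \<Rightarrow> 'n \<Rightarrow> real)) a b)"
  using mc_jacobi[of M X Y] by (simp add: fun_eq_iff)

context lsetup
begin

lemma schur:
  assumes comm: "\<And>i w. mv N (mv (TT i) w) = mv (TT i) (mv N w)"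
  shows "\<exists>c. N = idm c"
proof -
  obtain re im :: "real^4" and \<alpha> \<beta> where nz: "re \<noteq> 0 \<or> im \<noteq> 0"
    and r1: "mv N re = \<alpha> *\<^sub>R re - \<beta> *\<^sub>R im" and r2: "mv N im = \<beta> *\<^sub>R re + \<alpha> *\<^sub>R im"
    using complex_eig[of N] by blast
  show ?thesis
  proof (cases "\<beta> = 0")
    case True
    then have r1': "mv N re = \<alpha> *\<^sub>R re" and r2': "mv N im = \<alpha> *\<^sub>R im" using r1 r2 by simp_all
    from nz show ?thesis
    proof
      assume "re \<noteq> 0" then show ?thesis using eig_scalar[OF comm _ r1'] by blast
    next
      assume "im \<noteq> 0" then show ?thesis using eig_scalar[OF comm _ r2'] by blast
    qed
  next
    case bnz: False
    define Q where "Q = (\<lambda>a b. mm N N a b - 2 * \<alpha> * N a b + (\<alpha> * \<alpha> + \<beta> * \<beta>) * (if a = b then 1 else 0))"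
    have mvQ: "mv Q w = mv N (mv N w) - (2 * \<alpha>) *\<^sub>R mv N w + (\<alpha> * \<alpha> + \<beta> * \<beta>) *\<^sub>R w" for w
    proof -
      have "mv Q w = mv (mm N N) w - mv (\<lambda>a b. (2 * \<alpha>) * N a b) w + mv (idm (\<alpha> * \<alpha> + \<beta> * \<beta>)) w"
        unfolding Q_def idm_def mv_fadd[symmetric] mv_fdiff[symmetric] by (simp add: mult.assoc)
      then show ?thesis unfolding mv_mm mv_fscale mv_idm .
    qed
    have Qcomm: "mv Q (mv (TT i) w) = mv (TT i) (mv Q w)" for i w
      unfolding mvQ comm mv_add mv_diff mv_scale ..
    have Qre: "mv Q re = 0" unfolding mvQ r1 mv_diff mv_scale r2
      by (simp add: Finite_Cartesian_Product.vec_eq_iff algebra_simps)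
    have Qim: "mv Q im = 0" unfolding mvQ r2 mv_add mv_scale r1
      by (simp add: Finite_Cartesian_Product.vec_eq_iff algebra_simps)
    have Q0: "Q = idm 0"
      using nz eig_scalar[OF Qcomm _ ] Qre Qim by (metis scale_zero_left)
    have Qw: "mv N (mv N w) - (2 * \<alpha>) *\<^sub>R mv N w + (\<alpha> * \<alpha> + \<beta> * \<beta>) *\<^sub>R w = 0" for w
      using mvQ[of w] unfolding Q0 mv_idm by simp
    define J where "J = (\<lambda>a b. (1 / \<beta>) * (N a b - \<alpha> * (if a = b then 1 else 0)))"
    have mvJ: "mv J w = (1 / \<beta>) *\<^sub>R (mv N w - \<alpha> *\<^sub>R w)" for w
    proof -
      have "mv J w = mv (\<lambda>a b. (1/\<beta>) * (N a b - idm \<alpha> a b)) w" unfolding J_def idm_def ..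
      also have "\<dots> = (1/\<beta>) *\<^sub>R mv (\<lambda>a b. N a b - idm \<alpha> a b) w" by (rule mv_fscale)
      also have "\<dots> = (1/\<beta>) *\<^sub>R (mv N w - mv (idm \<alpha>) w)" by (simp only: mv_fdiff)
      finally show ?thesis by (simp only: mv_idm)
    qed
    have Jcomm: "mv J (mv (TT i) w) = mv (TT i) (mv J w)" for i w
      unfolding mvJ comm mv_diff mv_scale ..
    have JJ: "mv J (mv J w) = - w" for w
    proof -
      have "mv J (mv J w) = (1 / \<beta>) *\<^sub>R ((1 / \<beta>) *\<^sub>R (mv N (mv N w) - \<alpha> *\<^sub>R mv N w) - \<alpha> *\<^sub>R ((1 / \<beta>) *\<^sub>R (mv N w - \<alpha> *\<^sub>R w)))"
        unfolding mvJ mv_scale mv_diff ..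
      also have "\<dots> = (1 / (\<beta> * \<beta>)) *\<^sub>R (mv N (mv N w) - (2 * \<alpha>) *\<^sub>R mv N w + (\<alpha> * \<alpha>) *\<^sub>R w)"
        by (simp add: Finite_Cartesian_Product.vec_eq_iff field_simps)
      also have "mv N (mv N w) - (2 * \<alpha>) *\<^sub>R mv N w + (\<alpha> * \<alpha>) *\<^sub>R w = - ((\<beta> * \<beta>) *\<^sub>R w)"
        using Qw[of w] by (simp add: Finite_Cartesian_Product.vec_eq_iff algebra_simps)
      finally show ?thesis using bnz by (simp add: Finite_Cartesian_Product.vec_eq_iff)
    qed
    show ?thesis using J_false[OF Jcomm JJ] ..
  qed
qed

end

context lsetup
begin

lemma main_fwd:
  assumes h: "\<forall>a i b. Mder Ms Mv Ts a i b = 0"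
  shows "\<exists>(c::real) (bv::10 \<Rightarrow> real).
            (\<forall>a b. Ms a b = c * (if a = b then 1 else 0) + (\<Sum>k\<in>UNIV. bv k * Ts a k b)) \<and>
            (\<forall>i j. Mv i j = (\<Sum>k\<in>UNIV. bv k * Tv i k j))"
proof -
  define D :: "real^10^10" where "D = (\<chi> k i. Mv k i)"
  have h1: "mc Ms (TT i) = (\<lambda>a b. \<Sum>k\<in>UNIV. Mv k i * Ts a k b)" for i
  proof (intro ext)
    fix a b
    have "Mder Ms Mv Ts a i b = 0" using h by blast
    then show "mc Ms (TT i) a b = (\<Sum>k\<in>UNIV. Mv k i * Ts a k b)"
      unfolding Mder_def mc_def mm_def by simp
  qed
  have rhoD: "rho (D *v x) = (\<lambda>a b. \<Sum>i\<in>UNIV. x$i * (\<Sum>k\<in>UNIV. Mv k i * Ts a k b))" for x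
  proof (intro ext)
    fix a b
    have "rho (D *v x) a b = (\<Sum>k\<in>UNIV. \<Sum>i\<in>UNIV. x$i * (Mv k i * Ts a k b))"
      unfolding rho_def D_def matrix_vector_mult_def by (simp add: sum_distrib_left sum_distrib_right algebra_simps)
    also have "\<dots> = (\<Sum>i\<in>UNIV. \<Sum>k\<in>UNIV. x$i * (Mv k i * Ts a k b))" by (rule sum.swap)
    finally show "rho (D *v x) a b = (\<Sum>i\<in>UNIV. x$i * (\<Sum>k\<in>UNIV. Mv k i * Ts a k b))"
      by (simp add: sum_distrib_left)
  qed
  have h2: "mc Ms (rho x) = rho (D *v x)" for x
  proof -
    have "mc Ms (rho x) = (\<lambda>a b. \<Sum>i\<in>UNIV. x$i * mc Ms (TT i) a b)"
      unfolding mc_def rho_def mm_lin_right mm_lin_left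
      by (simp add: right_diff_distrib sum_subtractf)
    then show ?thesis unfolding rhoD h1 by simp
  qed
  have der: "D *v br x y = br (D *v x) y + br x (D *v y)" for x y
  proof (rule rho_inj)
    have "rho (D *v br x y) = mc Ms (rho (br x y))" by (rule h2[symmetric])
    also have "\<dots> = mc Ms (mc (rho x) (rho y))" by (simp only: rho_br)
    also have "\<dots> = (\<lambda>a b. mc (mc Ms (rho x)) (rho y) a b + mc (rho x) (mc Ms (rho y)) a b)"
      by (rule mc_deriv)
    also have "\<dots> = (\<lambda>a b. mc (rho (D *v x)) (rho y) a b + mc (rho x) (rho (D *v y)) a b)"
      by (simp only: h2)
    also have "\<dots> = rho (br (D *v x) y + br x (D *v y))"
      by (simp only: rho_add rho_br)
    finally show "rho (D *v br x y) = rho (br (D *v x) y + br x (D *v y))" .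
  qed
  obtain bb where Db: "D = adm bb" using deriv_inner[OF der] by blast
  define N where "N = (\<lambda>a b. Ms a b - rho bb a b)"
  have mcN: "mc N (TT i) = (\<lambda>a b. 0)" for i
  proof -
    have "mc N (TT i) = (\<lambda>a b. mc Ms (TT i) a b - mc (rho bb) (TT i) a b)"
      unfolding N_def mc_def mm_diff_left mm_diff_right by (simp add: fun_eq_iff)
    also have "\<dots> = (\<lambda>a b. rho (D *v axis i 1) a b - rho (br bb (axis i 1)) a b)"
      unfolding rho_br rho_axis[symmetric] h2 ..
    also have "\<dots> = (\<lambda>a b. 0)" unfolding Db br_def by simp
    finally show ?thesis .
  qed
  have comm: "mv N (mv (TT i) w) = mv (TT i) (mv N w)" for i w
  proof -
    have "mm N (TT i) = mm (TT i) N" using mcN[of i] unfolding mc_def by (simp add: fun_eq_iff)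
    then show ?thesis unfolding mv_mm[symmetric] by simp
  qed
  obtain c where Nc: "N = idm c" using schur[OF comm] by blast
  have "Ms a b = c * (if a = b then 1 else 0) + (\<Sum>k\<in>UNIV. bb$k * Ts a k b)" for a b
  proof -
    have "N a b = idm c a b" using Nc by simp
    then show ?thesis unfolding N_def idm_def rho_def by simp
  qed
  moreover have "Mv i j = (\<Sum>k\<in>UNIV. bb$k * Tv i k j)" for i j
  proof -
    have "D $ i $ j = adm bb $ i $ j" using Db by simp
    then show ?thesis unfolding D_def adm_def by simp
  qed
  ultimately have "(\<forall>a b. Ms a b = c * (if a = b then 1 else 0) + (\<Sum>k\<in>UNIV. (\<lambda>k. bb$k) k * Ts a k b)) \<and>
            (\<forall>i j. Mv i j = (\<Sum>k\<in>UNIV. (\<lambda>k. bb$k) k * Tv i k j))" by simp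
  then show ?thesis by (intro exI)
qed

lemma main_bwd:
  assumes Ms: "\<forall>a b. Ms a b = c * (if a = b then 1 else 0) + (\<Sum>k\<in>UNIV. bv k * Ts a k b)"
    and Mv: "\<forall>i j. Mv i j = (\<Sum>k\<in>UNIV. bv k * Tv i k j)"
  shows "\<forall>a i b. Mder Ms Mv Ts a i b = 0"
proof (intro allI)
  fix a i b
  have Ms': "Ms = (\<lambda>a b. idm c a b + (\<Sum>k\<in>UNIV. bv k * Ts a k b))"
    using Ms unfolding idm_def by (simp add: fun_eq_iff)
  have "Mder Ms Mv Ts a i b = mc Ms (TT i) a b - (\<Sum>k\<in>UNIV. Mv k i * Ts a k b)"
    unfolding Mder_def mc_def mm_def by simp
  also have "mc Ms (TT i) a b = (\<Sum>k\<in>UNIV. bv k * mc (TT k) (TT i) a b)"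
  proof -
    have e1: "mm (idm c) (TT i) = (\<lambda>a b. c * Ts a i b)"
      unfolding mm_def idm_def by (intro ext) (simp add: ifz1 ifz2 sum.delta mult.assoc)
    have e2: "mm (TT i) (idm c) = (\<lambda>a b. c * Ts a i b)"
      unfolding mm_def idm_def by (intro ext) (simp add: ifz1 ifz2 sum.delta mult.assoc mult.commute)
    have "mc Ms (TT i) a b = mm (idm c) (TT i) a b + (\<Sum>k\<in>UNIV. bv k * mm (TT k) (TT i) a b)
        - (mm (TT i) (idm c) a b + (\<Sum>k\<in>UNIV. bv k * mm (TT i) (TT k) a b))"
    proof -
      have fl: "mm (\<lambda>a b. X a b + Y a b) Z = (\<lambda>a b. mm X Z a b + mm Y Z a b)" for X Y Z :: "4 \<Rightarrow> 4 \<Rightarrow> real"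
        unfolding mm_def by (intro ext) (simp add: distrib_right sum.distrib)
      have fr: "mm Z (\<lambda>a b. X a b + Y a b) = (\<lambda>a b. mm Z X a b + mm Z Y a b)" for X Y Z :: "4 \<Rightarrow> 4 \<Rightarrow> real"
        unfolding mm_def by (intro ext) (simp add: distrib_left sum.distrib)
      have l: "mm (\<lambda>a b. idm c a b + (\<Sum>k\<in>UNIV. bv k * Ts a k b)) (TT i) a b
          = mm (idm c) (TT i) a b + (\<Sum>k\<in>UNIV. bv k * mm (TT k) (TT i) a b)"
        unfolding fl using fun_cong[OF fun_cong[OF mm_lin_left[of bv "TT" "TT i"]], of a b] by simp
      have r: "mm (TT i) (\<lambda>a b. idm c a b + (\<Sum>k\<in>UNIV. bv k * Ts a k b)) a b
          = mm (TT i) (idm c) a b + (\<Sum>k\<in>UNIV. bv k * mm (TT i) (TT k) a b)"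
        unfolding fr using fun_cong[OF fun_cong[OF mm_lin_right[of "TT i" bv "TT"]], of a b] by simp
      show ?thesis unfolding mc_def Ms'[symmetric] l[unfolded Ms'[symmetric]] r[unfolded Ms'[symmetric]] ..
    qed
    then show ?thesis unfolding e1 e2 mc_def by (simp add: right_diff_distrib sum_subtractf)
  qed
  also have "(\<Sum>k\<in>UNIV. bv k * mc (TT k) (TT i) a b) = (\<Sum>k\<in>UNIV. Mv k i * Ts a k b)"
  proof -
    have "(\<Sum>k\<in>UNIV. bv k * mc (TT k) (TT i) a b) = (\<Sum>k\<in>UNIV. \<Sum>m\<in>UNIV. bv k * (Tv m k i * Ts a m b))"
      unfolding rep' by (simp add: sum_distrib_left)
    also have "\<dots> = (\<Sum>m\<in>UNIV. \<Sum>k\<in>UNIV. bv k * (Tv m k i * Ts a m b))" by (rule sum.swap)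
    also have "\<dots> = (\<Sum>m\<in>UNIV. Mv m i * Ts a m b)" using Mv by (simp add: sum_distrib_right mult.assoc)
    finally show ?thesis .
  qed
  finally show "Mder Ms Mv Ts a i b = 0" by simp
qed

end

theorem mainTheorem13:
  fixes Tv :: "10 \<Rightarrow> 10 \<Rightarrow> 10 \<Rightarrow> real"
    and Ts :: "4 \<Rightarrow> 10 \<Rightarrow> 4 \<Rightarrow> real"
    and Ms :: "4 \<Rightarrow> 4 \<Rightarrow> real"
    and Mv :: "10 \<Rightarrow> 10 \<Rightarrow> real"
  assumes "so23_structure_constants Tv"
    and "is_rep Tv Ts"
    and "irreducible_rep Ts"
  shows "(\<forall>a i b. Mder Ms Mv Ts a i b = 0) \<longleftrightarrow>
         (\<exists>(c::real) (bv::10 \<Rightarrow> real).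
            (\<forall>a b. Ms a b = c * (if a = b then 1 else 0) + (\<Sum>k\<in>UNIV. bv k * Ts a k b)) \<and>
            (\<forall>i j. Mv i j = (\<Sum>k\<in>UNIV. bv k * Tv i k j)))"
proof -
  obtain E :: "10 \<Rightarrow> 5 \<Rightarrow> 5 \<Rightarrow> real" where E1: "\<forall>i. in_so23 (E i)"
    and E2: "\<forall>c :: 10 \<Rightarrow> real. (\<forall>a b. (\<Sum>i\<in>UNIV. c i * E i a b) = 0) \<longrightarrow> (\<forall>i. c i = 0)"
    and E3: "\<forall>i j a b. mat5_mult (E i) (E j) a b - mat5_mult (E j) (E i) a b
                     = (\<Sum>k\<in>UNIV. Tv k i j * E k a b)"
    using assms(1) unfolding so23_structure_constants_def by blast
  interpret lsetup Tv Ts E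
  proof
    show "\<And>i. in_so23 (E i)" using E1 by blast
    show "\<And>c. \<forall>a b. (\<Sum>i\<in>UNIV. c i * E i a b) = 0 \<Longrightarrow> \<forall>i. c i = 0" using E2 by blast
    show "\<And>i j a b. mat5_mult (E i) (E j) a b - mat5_mult (E j) (E i) a b = (\<Sum>k\<in>UNIV. Tv k i j * E k a b)"
      using E3 by blast
    show "is_rep Tv Ts" by (rule assms(2))
    show "irreducible_rep Ts" by (rule assms(3))
  qed
  show ?thesis
  proof
    assume "\<forall>a i b. Mder Ms Mv Ts a i b = 0"
    then show "\<exists>(c::real) (bv::10 \<Rightarrow> real).
            (\<forall>a b. Ms a b = c * (if a = b then 1 else 0) + (\<Sum>k\<in>UNIV. bv k * Ts a k b)) \<and>
            (\<forall>i j. Mv i j = (\<Sum>k\<in>UNIV. bv k * Tv i k j))" by (rule main_fwd)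
  next
    assume "\<exists>(c::real) (bv::10 \<Rightarrow> real).
            (\<forall>a b. Ms a b = c * (if a = b then 1 else 0) + (\<Sum>k\<in>UNIV. bv k * Ts a k b)) \<and>
            (\<forall>i j. Mv i j = (\<Sum>k\<in>UNIV. bv k * Tv i k j))"
    then obtain c bv where "\<forall>a b. Ms a b = c * (if a = b then 1 else 0) + (\<Sum>k\<in>UNIV. bv k * Ts a k b)"
      and "\<forall>i j. Mv i j = (\<Sum>k\<in>UNIV. bv k * Tv i k j)" by blast
    then show "\<forall>a i b. Mder Ms Mv Ts a i b = 0" by (rule main_bwd)
  qed
qed

end
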